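(* Let $X$ be a continuous random variable with probability density function $f$ whose support is the interval $(L,R)$, where $-\infty\le L<R\le\infty$, and suppose $f$ is continuous on $(L,R)$. Let $p$ be a real number in the interior of $\mathcal{D}=\{p\ge 1: E[|X|^{p-1}]<\infty\}$, let $\nu_p$ be the $p$-mean of $X$, and let $$H_p=\int_0^{\nu_p-L} y^{p-1} f(\nu_p-y)\,dy=\int_0^{R-\nu_p} y^{p-1} f(\nu_p+y)\,dy.$$ If a random variable with density $\frac{1}{H_p}y^{p-1}f(\nu_p+y)\mathbf{1}_{(0,R-\nu_p)}(y)$ exhibits strict stochastic dominance over a random variable with density $\frac{1}{H_p}y^{p-1}f(\nu_p-y)\mathbf{1}_{(0,\nu_p-L)}(y)$, then the function $q\mapsto\nu_q$ is increasing at $p$ (its derivative at $p$ is positive). Consequently, if this stochastic dominance holds for every $p$ in the interior of $\mathcal{D}$, then $X$ is truly positively skewed.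
   Context: For $p\ge 1$ and a continuous random variable $X$ with $E[|X|^{p-1}]<\infty$, the $p$-mean $\nu_p$ is the unique real solution $\nu$ of $E[(X-\nu)_+^{p-1}]=E[(\nu-X)_+^{p-1}]$ (for $p=1$ this is the median). The domain of $p\mapsto\nu_p$ is $\mathcal{D}=\{p\ge1:E[|X|^{p-1}]<\infty\}$. A random variable $Y$ with CDF $F_Y$ exhibits strict stochastic dominance over $Z$ with CDF $F_Z$ if $F_Z(x)\ge F_Y(x)$ for all $x$ and $F_Z\not\equiv F_Y$. $X$ is called truly positively skewed if $p\mapsto \nu_p$ is increasing on $\mathcal{D}$, provided the interior of $\mathcal{D}$ is nonempty. *)

theory Defs
  imports "HOL-Analysis.Analysis"
begin

text \<open>A continuous random variable X is represented by its Lebesgue density f.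
  Note: in Isabelle 0 powr 0 = 0, so (max (x - nu) 0) powr 0 is the indicator of x > nu,
  which is the intended meaning of (X - nu)_+^0 for p = 1 (median).\<close>

definition pdomain :: "(real \<Rightarrow> real) \<Rightarrow> real set" where
  "pdomain f = {p. p \<ge> 1 \<and> integrable lborel (\<lambda>x. \<bar>x\<bar> powr (p - 1) * f x)}"

definition pmean :: "(real \<Rightarrow> real) \<Rightarrow> real \<Rightarrow> real" where
  "pmean f p = (THE \<nu>. (\<integral>x. (max (x - \<nu>) 0) powr (p - 1) * f x \<partial>lborel)
                     = (\<integral>x. (max (\<nu> - x) 0) powr (p - 1) * f x \<partial>lborel))"

definition dens_cdf :: "(real \<Rightarrow> real) \<Rightarrow> real \<Rightarrow> real" where
  "dens_cdf g x = (\<integral>y. indicator {..x} y * g y \<partial>lborel)"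

definition strict_stoch_dom :: "(real \<Rightarrow> real) \<Rightarrow> (real \<Rightarrow> real) \<Rightarrow> bool" where
  "strict_stoch_dom gY gZ \<longleftrightarrow>
     (\<forall>x. dens_cdf gZ x \<ge> dens_cdf gY x) \<and> dens_cdf gZ \<noteq> dens_cdf gY"

definition truly_pos_skewed :: "(real \<Rightarrow> real) \<Rightarrow> bool" where
  "truly_pos_skewed f \<longleftrightarrow> interior (pdomain f) \<noteq> {} \<and> strict_mono_on (pdomain f) (pmean f)"

definition Hp :: "(real \<Rightarrow> real) \<Rightarrow> ereal \<Rightarrow> real \<Rightarrow> real" where
  "Hp f L p = (\<integral>y. indicator {y. 0 < y \<and> ereal y < ereal (pmean f p) - L} y
                   * y powr (p - 1) * f (pmean f p - y) \<partial>lborel)"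

definition dens_plus :: "(real \<Rightarrow> real) \<Rightarrow> ereal \<Rightarrow> ereal \<Rightarrow> real \<Rightarrow> real \<Rightarrow> real" where
  "dens_plus f L R p y = indicator {y. 0 < y \<and> ereal y < R - ereal (pmean f p)} y
        * (y powr (p - 1) * f (pmean f p + y) / Hp f L p)"

definition dens_minus :: "(real \<Rightarrow> real) \<Rightarrow> ereal \<Rightarrow> real \<Rightarrow> real \<Rightarrow> real" where
  "dens_minus f L p y = indicator {y. 0 < y \<and> ereal y < ereal (pmean f p) - L} y
        * (y powr (p - 1) * f (pmean f p - y) / Hp f L p)"

end

theory Submission
  imports Defs
begin


lemma powr_sandwich:
  fixes u s s0 t :: real
  assumes "u > 0" "s0 \<le> s" "s \<le> t"
  shows "u powr s \<le> u powr s0 + u powr t"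
proof (cases "u \<le> 1")
  case True
  then have "u powr s \<le> u powr s0" using assms powr_mono' by (metis less_eq_real_def)
  then show ?thesis using powr_ge_zero[of u t] by linarith
next
  case False
  then have "u powr s \<le> u powr t" using assms powr_mono by auto
  then show ?thesis using powr_ge_zero[of u s0] by linarith
qed

lemma powr_le_1_plus:
  fixes u s t :: real
  assumes "u \<ge> 0" "0 \<le> s" "s \<le> t"
  shows "u powr s \<le> 1 + u powr t"
proof (cases "u \<le> 1")
  case True
  then have "u powr s \<le> 1 powr s"
    using assms by (intro powr_mono2) auto
  then have "u powr s \<le> 1" by simp
  then show ?thesis using powr_ge_zero[of u t] by linarith
next
  case False
  then have "u powr s \<le> u powr t" using assms powr_mono by auto
  then show ?thesis by linarith
qed

lemma powr_sum_bound:
  fixes a b r :: real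
  assumes "a \<ge> 0" "b \<ge> 0" "r \<ge> 0"
  shows "(a + b) powr r \<le> 2 powr r * (a powr r + b powr r)"
proof -
  have "(a + b) powr r \<le> (2 * max a b) powr r"
    by (rule powr_mono2) (use assms in auto)
  also have "\<dots> = 2 powr r * max a b powr r"
    using assms by (simp add: powr_mult)
  also have "\<dots> \<le> 2 powr r * (a powr r + b powr r)"
  proof -
    have "max a b powr r \<le> a powr r + b powr r"
      using powr_ge_zero[of a r] powr_ge_zero[of b r] by (cases "a \<le> b") (auto simp: max_def)
    then show ?thesis by (simp add: mult_left_mono)
  qed
  finally show ?thesis .
qed

lemma abs_diff_powr_bound:
  fixes x c r :: real
  assumes "r \<ge> 0"
  shows "\<bar>x - c\<bar> powr r \<le> 2 powr r * (\<bar>x\<bar> powr r + \<bar>c\<bar> powr r)"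
proof -
  have "\<bar>x - c\<bar> powr r \<le> (\<bar>x\<bar> + \<bar>c\<bar>) powr r"
    by (rule powr_mono2) (use assms in auto)
  also have "\<dots> \<le> 2 powr r * (\<bar>x\<bar> powr r + \<bar>c\<bar> powr r)"
    by (rule powr_sum_bound) (use assms in auto)
  finally show ?thesis .
qed

lemma ereal_between_open:
  fixes L R :: ereal
  shows "open {x::real. L < ereal x \<and> ereal x < R}"
proof (rule Topological_Spaces.openI)
  fix x assume "x \<in> {x::real. L < ereal x \<and> ereal x < R}"
  then have h: "L < ereal x" "ereal x < R" by auto
  obtain l where l: "L < ereal l" "ereal l < ereal x" using ereal_dense2[OF h(1)] by auto
  obtain r where r: "ereal x < ereal r" "ereal r < R" using ereal_dense2[OF h(2)] by auto
  have "open {l<..<r}" by simp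
  moreover have "x \<in> {l<..<r}" using l r by auto
  moreover have "{l<..<r} \<subseteq> {x::real. L < ereal x \<and> ereal x < R}"
  proof
    fix y assume "y \<in> {l<..<r}"
    then have "ereal l < ereal y" "ereal y < ereal r" by auto
    then show "y \<in> {x::real. L < ereal x \<and> ereal x < R}" using l(1) r(2) by (metis less_trans mem_Collect_eq)
  qed
  ultimately show "\<exists>T. open T \<and> x \<in> T \<and> T \<subseteq> {x::real. L < ereal x \<and> ereal x < R}" by blast
qed

definition Aint :: "(real \<Rightarrow> real) \<Rightarrow> real \<Rightarrow> real \<Rightarrow> real" where
  "Aint f \<nu> q = (\<integral>x. (max (x - \<nu>) 0) powr (q - 1) * f x \<partial>lborel)"
definition Bint :: "(real \<Rightarrow> real) \<Rightarrow> real \<Rightarrow> real \<Rightarrow> real" where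
  "Bint f \<nu> q = (\<integral>x. (max (\<nu> - x) 0) powr (q - 1) * f x \<partial>lborel)"
definition Gf :: "(real \<Rightarrow> real) \<Rightarrow> real \<Rightarrow> real \<Rightarrow> real" where
  "Gf f \<nu> q = Aint f \<nu> q - Bint f \<nu> q"

lemma pmean_alt: "pmean f q = (THE \<nu>. Aint f \<nu> q = Bint f \<nu> q)"
  unfolding pmean_def Aint_def Bint_def ..

locale dens =
  fixes f :: "real \<Rightarrow> real" and L R :: ereal
  assumes LR: "L < R"
    and fmeas[measurable]: "f \<in> borel_measurable borel"
    and fnn: "\<And>x. f x \<ge> 0"
    and fint: "integrable lborel f"
    and f1: "(\<integral>x. f x \<partial>lborel) = 1"
    and fout: "\<And>x. \<not> (L < ereal x \<and> ereal x < R) \<Longrightarrow> f x = 0"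
    and fcl: "closure {x. f x > 0} = {x. L \<le> ereal x \<and> ereal x \<le> R}"
    and fcont: "continuous_on {x. L < ereal x \<and> ereal x < R} f"
begin

lemma pdom_ge1: "q \<in> pdomain f \<Longrightarrow> q \<ge> 1"
  unfolding pdomain_def by auto

lemma pdom_int: "q \<in> pdomain f \<Longrightarrow> integrable lborel (\<lambda>x. \<bar>x\<bar> powr (q - 1) * f x)"
  unfolding pdomain_def by auto

lemma pdom_down:
  assumes "q \<in> pdomain f" "1 \<le> q'" "q' \<le> q"
  shows "q' \<in> pdomain f"
proof -
  have "integrable lborel (\<lambda>x. f x + \<bar>x\<bar> powr (q - 1) * f x)"
    using fint pdom_int[OF assms(1)] by auto
  then have "integrable lborel (\<lambda>x. \<bar>x\<bar> powr (q' - 1) * f x)"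
  proof (rule Bochner_Integration.integrable_bound)
    show "AE x in lborel. norm (\<bar>x\<bar> powr (q' - 1) * f x) \<le> norm (f x + \<bar>x\<bar> powr (q - 1) * f x)"
    proof (intro AE_I2)
      fix x
      have "\<bar>x\<bar> powr (q' - 1) \<le> 1 + \<bar>x\<bar> powr (q - 1)"
        by (rule powr_le_1_plus) (use assms in auto)
      then have "\<bar>x\<bar> powr (q' - 1) * f x \<le> (1 + \<bar>x\<bar> powr (q - 1)) * f x"
        using fnn by (simp add: mult_right_mono)
      then show "norm (\<bar>x\<bar> powr (q' - 1) * f x) \<le> norm (f x + \<bar>x\<bar> powr (q - 1) * f x)"
        using fnn[of x] by (simp add: algebra_simps)
    qed
  qed measurable
  then show ?thesis unfolding pdomain_def using assms by auto
qed

lemma one_pdom: "1 \<in> pdomain f"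
proof -
  have "integrable lborel (\<lambda>x. \<bar>x\<bar> powr (1 - 1) * f x)"
    using fint
  proof (rule Bochner_Integration.integrable_bound)
    show "AE x in lborel. norm (\<bar>x\<bar> powr (1 - 1) * f x) \<le> norm (f x)"
      using fnn by (intro AE_I2) (auto simp: abs_mult)
  qed measurable
  then show ?thesis unfolding pdomain_def by auto
qed

lemma int_absdiff:
  assumes "q \<in> pdomain f"
  shows "integrable lborel (\<lambda>x. \<bar>x - c\<bar> powr (q - 1) * f x)"
proof -
  define r where "r = q - 1"
  have r0: "r \<ge> 0" using pdom_ge1[OF assms] r_def by auto
  have "integrable lborel (\<lambda>x. 2 powr r * (\<bar>x\<bar> powr r * f x + \<bar>c\<bar> powr r * f x))"
    using fint pdom_int[OF assms] unfolding r_def by auto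
  then have "integrable lborel (\<lambda>x. \<bar>x - c\<bar> powr r * f x)"
  proof (rule Bochner_Integration.integrable_bound)
    show "AE x in lborel. norm (\<bar>x - c\<bar> powr r * f x) \<le> norm (2 powr r * (\<bar>x\<bar> powr r * f x + \<bar>c\<bar> powr r * f x))"
    proof (intro AE_I2)
      fix x
      have "\<bar>x - c\<bar> powr r * f x \<le> (2 powr r * (\<bar>x\<bar> powr r + \<bar>c\<bar> powr r)) * f x"
        using abs_diff_powr_bound[OF r0, of x c] fnn[of x] by (simp add: mult_right_mono)
      then show "norm (\<bar>x - c\<bar> powr r * f x) \<le> norm (2 powr r * (\<bar>x\<bar> powr r * f x + \<bar>c\<bar> powr r * f x))"
        using fnn[of x] by (simp add: algebra_simps)
    qed
  qed measurable
  then show ?thesis unfolding r_def .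
qed

lemma int_phi:
  assumes "q \<in> pdomain f"
  shows "integrable lborel (\<lambda>x. max (x - c) 0 powr (q - 1) * f x)"
    and "integrable lborel (\<lambda>x. max (c - x) 0 powr (q - 1) * f x)"
proof -
  have q1: "q - 1 \<ge> 0" using pdom_ge1[OF assms] by auto
  show "integrable lborel (\<lambda>x. max (x - c) 0 powr (q - 1) * f x)"
    using int_absdiff[OF assms, of c]
  proof (rule Bochner_Integration.integrable_bound)
    show "AE x in lborel. norm (max (x - c) 0 powr (q - 1) * f x) \<le> norm (\<bar>x - c\<bar> powr (q - 1) * f x)"
    proof (intro AE_I2)
      fix x
      have "max (x - c) 0 powr (q - 1) \<le> \<bar>x - c\<bar> powr (q - 1)"
        by (rule powr_mono2) (use q1 in auto)
      then show "norm (max (x - c) 0 powr (q - 1) * f x) \<le> norm (\<bar>x - c\<bar> powr (q - 1) * f x)"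
        using fnn[of x] by (simp add: mult_right_mono)
    qed
  qed measurable
  show "integrable lborel (\<lambda>x. max (c - x) 0 powr (q - 1) * f x)"
    using int_absdiff[OF assms, of c]
  proof (rule Bochner_Integration.integrable_bound)
    show "AE x in lborel. norm (max (c - x) 0 powr (q - 1) * f x) \<le> norm (\<bar>x - c\<bar> powr (q - 1) * f x)"
    proof (intro AE_I2)
      fix x
      have "max (c - x) 0 powr (q - 1) \<le> \<bar>x - c\<bar> powr (q - 1)"
        by (rule powr_mono2) (use q1 in auto)
      then show "norm (max (c - x) 0 powr (q - 1) * f x) \<le> norm (\<bar>x - c\<bar> powr (q - 1) * f x)"
        using fnn[of x] by (simp add: mult_right_mono)
    qed
  qed measurable
qed

end


lemma dct_ev:
  fixes s :: "nat \<Rightarrow> real \<Rightarrow> real" and g w :: "real \<Rightarrow> real"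
  assumes "g \<in> borel_measurable lborel" "\<And>i. s i \<in> borel_measurable lborel" "integrable lborel w"
    and "AE x in lborel. (\<lambda>i. s i x) \<longlonglongrightarrow> g x"
    and "eventually (\<lambda>i. AE x in lborel. norm (s i x) \<le> w x) sequentially"
  shows "(\<lambda>i. integral\<^sup>L lborel (s i)) \<longlonglongrightarrow> integral\<^sup>L lborel g"
proof -
  obtain N where N: "\<And>n. n \<ge> N \<Longrightarrow> AE x in lborel. norm (s n x) \<le> w x"
    using assms(5) unfolding eventually_sequentially by auto
  have "(\<lambda>i. integral\<^sup>L lborel (s (i + N))) \<longlonglongrightarrow> integral\<^sup>L lborel g"
  proof (rule integral_dominated_convergence[where w=w])
    show "AE x in lborel. (\<lambda>i. s (i + N) x) \<longlonglongrightarrow> g x"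
      using assms(4) by eventually_elim (rule LIMSEQ_ignore_initial_segment)
    show "AE x in lborel. norm (s (i + N) x) \<le> w x" for i using N by auto
  qed (use assms in auto)
  then show ?thesis by (rule LIMSEQ_offset)
qed

lemma phi_tendsto:
  fixes Y g :: "'a \<Rightarrow> real"
  assumes "(Y \<longlongrightarrow> y) F" "y \<noteq> 0" "(g \<longlongrightarrow> e) F"
  shows "((\<lambda>n. max (Y n) 0 powr (g n)) \<longlongrightarrow> max y 0 powr e) F"
proof (cases "y > 0")
  case True
  have "((\<lambda>n. max (Y n) 0) \<longlongrightarrow> max y 0) F"
    using assms(1) by (intro tendsto_max tendsto_const)
  then show ?thesis using True assms(3) by (intro tendsto_powr) auto
next
  case False
  then have "y < 0" using assms(2) by auto
  then have "eventually (\<lambda>n. Y n < 0) F" using order_tendstoD(2)[OF assms(1)] by auto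
  then have "eventually (\<lambda>n. max (Y n) 0 powr (g n) = max y 0 powr e) F"
    by eventually_elim (use \<open>y < 0\<close> in auto)
  then show ?thesis by (rule tendsto_eventually)
qed

lemma integrable_const_indicator: "integrable lborel (\<lambda>x. (K::real) * indicator {\<alpha>..\<beta>::real} x)"
  by (intro integrable_mult_right integrable_real_indicator) (auto simp: emeasure_lborel_Icc_eq)

lemma integral_const_indicator:
  assumes "\<alpha> \<le> \<beta>"
  shows "(\<integral>x. (K::real) * indicator {\<alpha>..\<beta>::real} x \<partial>lborel) = K * (\<beta> - \<alpha>)"
proof -
  have "(\<integral>x. K * indicator {\<alpha>..\<beta>} x \<partial>lborel) = K * (\<integral>x. indicator {\<alpha>..\<beta>} x \<partial>lborel)"
    by (rule integral_mult_right_zero)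
  also have "(\<integral>x. indicator {\<alpha>..\<beta>} x \<partial>lborel) = \<beta> - \<alpha>"
    using assms by simp
  finally show ?thesis .
qed

context dens begin

lemma pos_interval:
  assumes "a < b" "L < ereal x0" "ereal x0 < R" "a < x0" "x0 < b"
  shows "\<exists>\<alpha> \<beta> c. a < \<alpha> \<and> \<alpha> < \<beta> \<and> \<beta> < b \<and> c > 0 \<and> (\<forall>x\<in>{\<alpha>..\<beta>}. c \<le> f x)"
proof -
  define U where "U = {x. L < ereal x \<and> ereal x < R} \<inter> {a<..<b}"
  have oU: "open U" unfolding U_def using ereal_between_open by auto
  have "x0 \<in> U" using assms unfolding U_def by auto
  have "U \<subseteq> closure {x. f x > 0}" unfolding fcl U_def by (auto simp: less_imp_le)
  then have "U \<inter> closure {x. f x > 0} \<noteq> {}" using \<open>x0 \<in> U\<close> by auto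
  then have "U \<inter> {x. f x > 0} \<noteq> {}" using open_Int_closure_eq_empty[OF oU] by auto
  then obtain x1 where x1: "x1 \<in> U" "f x1 > 0" by auto
  have "isCont f x1"
    using fcont ereal_between_open x1(1) continuous_on_eq_continuous_at unfolding U_def by blast
  then obtain d where d: "d > 0" "\<And>x'. dist x' x1 < d \<Longrightarrow> dist (f x') (f x1) < f x1 / 2"
    using x1(2) unfolding continuous_at_eps_delta by (meson half_gt_zero)
  obtain e where e: "e > 0" "ball x1 e \<subseteq> U" using oU x1(1) open_contains_ball by blast
  define \<eta> where "\<eta> = min d e / 2"
  have eta: "\<eta> > 0" "\<eta> < d" "\<eta> < e" using d e unfolding \<eta>_def by auto
  have inU: "x \<in> U" if "\<bar>x - x1\<bar> \<le> \<eta>" for x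
    using e(2) that eta by (auto simp: dist_real_def subset_iff)
  have "x1 - \<eta> \<in> U" "x1 + \<eta> \<in> U" using inU eta by auto
  then have ab: "a < x1 - \<eta>" "x1 + \<eta> < b" unfolding U_def by auto
  have fin: "\<forall>x\<in>{x1 - \<eta>..x1 + \<eta>}. f x1 / 2 \<le> f x"
  proof
    fix x assume "x \<in> {x1 - \<eta>..x1 + \<eta>}"
    then have "dist x x1 < d" using eta by (auto simp: dist_real_def)
    then have "\<bar>f x - f x1\<bar> < f x1 / 2" using d(2) by (auto simp: dist_real_def)
    then show "f x1 / 2 \<le> f x" using abs_less_iff[of "f x - f x1" "f x1 / 2"] by linarith
  qed
  have c0: "f x1 / 2 > 0" using x1(2) by simp
  have lt: "x1 - \<eta> < x1 + \<eta>" using eta by simp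
  show ?thesis by (intro exI conjI, rule ab(1), rule lt, rule ab(2), rule c0, rule fin)
qed

lemma A_pos:
  assumes q: "q \<in> pdomain f" and "L < ereal x0" "ereal x0 < R" "\<nu> < x0"
  shows "Aint f \<nu> q > 0"
proof -
  obtain \<alpha> \<beta> c where ab: "\<nu> < \<alpha>" "\<alpha> < \<beta>" "\<beta> < x0 + 1" "c > 0" "\<forall>x\<in>{\<alpha>..\<beta>}. c \<le> f x"
    using pos_interval[of \<nu> "x0 + 1" x0] assms by auto
  define K where "K = (\<alpha> - \<nu>) powr (q - 1) * c"
  have K: "K > 0" using ab unfolding K_def by auto
  have "(\<integral>x. K * indicator {\<alpha>..\<beta>} x \<partial>lborel) \<le> Aint f \<nu> q"
    unfolding Aint_def
  proof (rule integral_mono)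
    show "integrable lborel (\<lambda>x. max (x - \<nu>) 0 powr (q - 1) * f x)" using int_phi(1)[OF q] .
    fix x
    show "K * indicator {\<alpha>..\<beta>} x \<le> max (x - \<nu>) 0 powr (q - 1) * f x"
    proof (cases "x \<in> {\<alpha>..\<beta>}")
      case True
      then have "(\<alpha> - \<nu>) powr (q - 1) \<le> max (x - \<nu>) 0 powr (q - 1)"
        using ab pdom_ge1[OF q] by (intro powr_mono2) auto
      moreover have "c \<le> f x" using ab True by auto
      ultimately show ?thesis using True ab unfolding K_def by (auto intro!: mult_mono)
    next
      case False
      then show ?thesis using fnn[of x] by simp
    qed
  qed (rule integrable_const_indicator)
  moreover have "(\<integral>x. K * indicator {\<alpha>..\<beta>} x \<partial>lborel) > 0"
    using K ab by (simp add: integral_const_indicator)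
  ultimately show ?thesis by linarith
qed

lemma B_pos:
  assumes q: "q \<in> pdomain f" and "L < ereal x0" "ereal x0 < R" "x0 < \<nu>"
  shows "Bint f \<nu> q > 0"
proof -
  obtain \<alpha> \<beta> c where ab: "x0 - 1 < \<alpha>" "\<alpha> < \<beta>" "\<beta> < \<nu>" "c > 0" "\<forall>x\<in>{\<alpha>..\<beta>}. c \<le> f x"
    using pos_interval[of "x0 - 1" \<nu> x0] assms by auto
  define K where "K = (\<nu> - \<beta>) powr (q - 1) * c"
  have K: "K > 0" using ab unfolding K_def by auto
  have "(\<integral>x. K * indicator {\<alpha>..\<beta>} x \<partial>lborel) \<le> Bint f \<nu> q"
    unfolding Bint_def
  proof (rule integral_mono)
    show "integrable lborel (\<lambda>x. max (\<nu> - x) 0 powr (q - 1) * f x)" using int_phi(2)[OF q] .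
    fix x
    show "K * indicator {\<alpha>..\<beta>} x \<le> max (\<nu> - x) 0 powr (q - 1) * f x"
    proof (cases "x \<in> {\<alpha>..\<beta>}")
      case True
      then have "(\<nu> - \<beta>) powr (q - 1) \<le> max (\<nu> - x) 0 powr (q - 1)"
        using ab pdom_ge1[OF q] by (intro powr_mono2) auto
      moreover have "c \<le> f x" using ab True by auto
      ultimately show ?thesis using True ab unfolding K_def by (auto intro!: mult_mono)
    next
      case False
      then show ?thesis using fnn[of x] by simp
    qed
  qed (rule integrable_const_indicator)
  moreover have "(\<integral>x. K * indicator {\<alpha>..\<beta>} x \<partial>lborel) > 0"
    using K ab by (simp add: integral_const_indicator)
  ultimately show ?thesis by linarith
qed

lemma A_zero:
  assumes "R \<le> ereal \<nu>"
  shows "Aint f \<nu> q = 0"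
proof -
  have h: "\<And>x. max (x - \<nu>) 0 powr (q - 1) * f x = 0"
  proof -
    fix x
    show "max (x - \<nu>) 0 powr (q - 1) * f x = 0"
    proof (cases "x > \<nu>")
      case True
      then have "ereal \<nu> < ereal x" by simp
      then have "R < ereal x" using assms by (rule le_less_trans[rotated])
      then have "\<not> ereal x < R" by (simp add: not_less less_imp_le)
      then have "f x = 0" by (intro fout) simp
      then show ?thesis by simp
    qed simp
  qed
  show ?thesis unfolding Aint_def h by simp
qed

lemma B_zero:
  assumes "ereal \<nu> \<le> L"
  shows "Bint f \<nu> q = 0"
proof -
  have h: "\<And>x. max (\<nu> - x) 0 powr (q - 1) * f x = 0"
  proof -
    fix x
    show "max (\<nu> - x) 0 powr (q - 1) * f x = 0"
    proof (cases "x < \<nu>")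
      case True
      then have "ereal x < ereal \<nu>" by simp
      then have "ereal x < L" using assms by (rule less_le_trans)
      then have "\<not> L < ereal x" by (simp add: not_less less_imp_le)
      then have "f x = 0" by (intro fout) simp
      then show ?thesis by simp
    qed simp
  qed
  show ?thesis unfolding Bint_def h by simp
qed

lemma A_mono:
  assumes q: "q \<in> pdomain f" and "\<nu> \<le> \<nu>'"
  shows "Aint f \<nu>' q \<le> Aint f \<nu> q"
  unfolding Aint_def
proof (rule integral_mono)
  fix x
  have "max (x - \<nu>') 0 powr (q - 1) \<le> max (x - \<nu>) 0 powr (q - 1)"
    using assms pdom_ge1[OF q] by (intro powr_mono2) auto
  then show "max (x - \<nu>') 0 powr (q - 1) * f x \<le> max (x - \<nu>) 0 powr (q - 1) * f x"
    using fnn[of x] by (simp add: mult_right_mono)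
qed (use int_phi[OF q] in auto)

lemma B_mono:
  assumes q: "q \<in> pdomain f" and "\<nu> \<le> \<nu>'"
  shows "Bint f \<nu> q \<le> Bint f \<nu>' q"
  unfolding Bint_def
proof (rule integral_mono)
  fix x
  have "max (\<nu> - x) 0 powr (q - 1) \<le> max (\<nu>' - x) 0 powr (q - 1)"
    using assms pdom_ge1[OF q] by (intro powr_mono2) auto
  then show "max (\<nu> - x) 0 powr (q - 1) * f x \<le> max (\<nu>' - x) 0 powr (q - 1) * f x"
    using fnn[of x] by (simp add: mult_right_mono)
qed (use int_phi[OF q] in auto)

lemma G_mono:
  assumes q: "q \<in> pdomain f" and "\<nu> \<le> \<nu>'"
  shows "Gf f \<nu>' q \<le> Gf f \<nu> q"
  using A_mono[OF assms] B_mono[OF assms] unfolding Gf_def by linarith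

lemma G_strict:
  assumes q: "q \<in> pdomain f" and "L < ereal x0" "ereal x0 < R" "\<nu> < x0" "x0 < \<nu>'"
  shows "Gf f \<nu>' q < Gf f \<nu> q"
proof -
  obtain \<alpha> \<beta> c where ab: "\<nu> < \<alpha>" "\<alpha> < \<beta>" "\<beta> < \<nu>'" "c > 0" "\<forall>x\<in>{\<alpha>..\<beta>}. c \<le> f x"
    using pos_interval[of \<nu> \<nu>' x0] assms by auto
  define K where "K = (\<alpha> - \<nu>) powr (q - 1) * c"
  have K: "K > 0" using ab unfolding K_def by auto
  have "Aint f \<nu> q - Aint f \<nu>' q = (\<integral>x. max (x - \<nu>) 0 powr (q - 1) * f x - max (x - \<nu>') 0 powr (q - 1) * f x \<partial>lborel)"
    unfolding Aint_def by (rule Bochner_Integration.integral_diff[symmetric]) (use int_phi[OF q] in auto)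
  also have "(\<integral>x. K * indicator {\<alpha>..\<beta>} x \<partial>lborel) \<le> \<dots>"
  proof (rule integral_mono)
    show "integrable lborel (\<lambda>x. max (x - \<nu>) 0 powr (q - 1) * f x - max (x - \<nu>') 0 powr (q - 1) * f x)"
      using int_phi[OF q] by auto
    fix x
    show "K * indicator {\<alpha>..\<beta>} x \<le> max (x - \<nu>) 0 powr (q - 1) * f x - max (x - \<nu>') 0 powr (q - 1) * f x"
    proof (cases "x \<in> {\<alpha>..\<beta>}")
      case True
      then have "(\<alpha> - \<nu>) powr (q - 1) \<le> max (x - \<nu>) 0 powr (q - 1)"
        using ab pdom_ge1[OF q] by (intro powr_mono2) auto
      moreover have "c \<le> f x" using ab True by auto
      moreover have "max (x - \<nu>') 0 = 0" using True ab by auto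
      ultimately show ?thesis using True ab unfolding K_def by (auto intro!: mult_mono)
    next
      case False
      have "max (x - \<nu>') 0 powr (q - 1) \<le> max (x - \<nu>) 0 powr (q - 1)"
        using assms pdom_ge1[OF q] by (intro powr_mono2) auto
      then show ?thesis using False fnn[of x] by (simp add: mult_right_mono)
    qed
  qed (rule integrable_const_indicator)
  finally have "(\<integral>x. K * indicator {\<alpha>..\<beta>} x \<partial>lborel) \<le> Aint f \<nu> q - Aint f \<nu>' q" .
  moreover have "(\<integral>x. K * indicator {\<alpha>..\<beta>} x \<partial>lborel) > 0"
    using K ab by simp
  moreover have "Bint f \<nu> q \<le> Bint f \<nu>' q" using B_mono[OF q, of \<nu> \<nu>'] assms by auto
  ultimately show ?thesis unfolding Gf_def by linarith
qed

end


lemma eventually_in_within: "eventually (\<lambda>x. x \<in> S) (at a within S)"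
  by (simp add: eventually_at_filter)

context dens begin

lemma A_cont:
  assumes q: "q \<in> pdomain f"
  shows "isCont (\<lambda>\<nu>. Aint f \<nu> q) \<nu>0"
proof (rule continuous_at_sequentiallyI)
  fix u assume u: "u \<longlonglongrightarrow> \<nu>0"
  have "Bseq u" using u by (intro convergent_imp_Bseq convergentI)
  then obtain K where K: "K > 0" "\<And>n. norm (u n) \<le> K" by (auto elim: BseqE)
  define r where "r = q - 1"
  have r0: "r \<ge> 0" using pdom_ge1[OF q] r_def by auto
  show "(\<lambda>n. Aint f (u n) q) \<longlonglongrightarrow> Aint f \<nu>0 q"
    unfolding Aint_def
  proof (rule dct_ev[where w="\<lambda>x. 2 powr r * (\<bar>x\<bar> powr r * f x + K powr r * f x)"])
    show "integrable lborel (\<lambda>x. 2 powr r * (\<bar>x\<bar> powr r * f x + K powr r * f x))"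
      using pdom_int[OF q] fint unfolding r_def by auto
    show "AE x in lborel. (\<lambda>n. max (x - u n) 0 powr (q - 1) * f x) \<longlonglongrightarrow> max (x - \<nu>0) 0 powr (q - 1) * f x"
      using AE_lborel_singleton[of \<nu>0]
    proof eventually_elim
      case (elim x)
      have "(\<lambda>n. max (x - u n) 0 powr (q - 1)) \<longlonglongrightarrow> max (x - \<nu>0) 0 powr (q - 1)"
        using elim by (intro phi_tendsto tendsto_intros u) auto
      then show ?case by (rule tendsto_mult[OF _ tendsto_const])
    qed
    show "\<forall>\<^sub>F n in sequentially. AE x in lborel. norm (max (x - u n) 0 powr (q - 1) * f x)
            \<le> 2 powr r * (\<bar>x\<bar> powr r * f x + K powr r * f x)"
    proof (intro always_eventually allI AE_I2)
      fix n x
      have "max (x - u n) 0 powr r \<le> \<bar>x - u n\<bar> powr r"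
        by (rule powr_mono2) (use r0 in auto)
      also have "\<dots> \<le> 2 powr r * (\<bar>x\<bar> powr r + \<bar>u n\<bar> powr r)"
        by (rule abs_diff_powr_bound[OF r0])
      also have "\<dots> \<le> 2 powr r * (\<bar>x\<bar> powr r + K powr r)"
        using K(2)[of n] r0 by (intro mult_left_mono add_left_mono powr_mono2) auto
      finally have "max (x - u n) 0 powr r * f x \<le> 2 powr r * (\<bar>x\<bar> powr r + K powr r) * f x"
        using fnn[of x] by (simp add: mult_right_mono)
      then show "norm (max (x - u n) 0 powr (q - 1) * f x) \<le> 2 powr r * (\<bar>x\<bar> powr r * f x + K powr r * f x)"
        using fnn[of x] unfolding r_def by (simp add: algebra_simps)
    qed
  qed measurable
qed

lemma B_cont:
  assumes q: "q \<in> pdomain f"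
  shows "isCont (\<lambda>\<nu>. Bint f \<nu> q) \<nu>0"
proof (rule continuous_at_sequentiallyI)
  fix u assume u: "u \<longlonglongrightarrow> \<nu>0"
  have "Bseq u" using u by (intro convergent_imp_Bseq convergentI)
  then obtain K where K: "K > 0" "\<And>n. norm (u n) \<le> K" by (auto elim: BseqE)
  define r where "r = q - 1"
  have r0: "r \<ge> 0" using pdom_ge1[OF q] r_def by auto
  show "(\<lambda>n. Bint f (u n) q) \<longlonglongrightarrow> Bint f \<nu>0 q"
    unfolding Bint_def
  proof (rule dct_ev[where w="\<lambda>x. 2 powr r * (\<bar>x\<bar> powr r * f x + K powr r * f x)"])
    show "integrable lborel (\<lambda>x. 2 powr r * (\<bar>x\<bar> powr r * f x + K powr r * f x))"
      using pdom_int[OF q] fint unfolding r_def by auto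
    show "AE x in lborel. (\<lambda>n. max (u n - x) 0 powr (q - 1) * f x) \<longlonglongrightarrow> max (\<nu>0 - x) 0 powr (q - 1) * f x"
      using AE_lborel_singleton[of \<nu>0]
    proof eventually_elim
      case (elim x)
      have "(\<lambda>n. max (u n - x) 0 powr (q - 1)) \<longlonglongrightarrow> max (\<nu>0 - x) 0 powr (q - 1)"
        using elim by (intro phi_tendsto tendsto_intros u) auto
      then show ?case by (rule tendsto_mult[OF _ tendsto_const])
    qed
    show "\<forall>\<^sub>F n in sequentially. AE x in lborel. norm (max (u n - x) 0 powr (q - 1) * f x)
            \<le> 2 powr r * (\<bar>x\<bar> powr r * f x + K powr r * f x)"
    proof (intro always_eventually allI AE_I2)
      fix n x
      have "max (u n - x) 0 powr r \<le> \<bar>x - u n\<bar> powr r"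
        by (rule powr_mono2) (use r0 in auto)
      also have "\<dots> \<le> 2 powr r * (\<bar>x\<bar> powr r + \<bar>u n\<bar> powr r)"
        by (rule abs_diff_powr_bound[OF r0])
      also have "\<dots> \<le> 2 powr r * (\<bar>x\<bar> powr r + K powr r)"
        using K(2)[of n] r0 by (intro mult_left_mono add_left_mono powr_mono2) auto
      finally have "max (u n - x) 0 powr r * f x \<le> 2 powr r * (\<bar>x\<bar> powr r + K powr r) * f x"
        using fnn[of x] by (simp add: mult_right_mono)
      then show "norm (max (u n - x) 0 powr (q - 1) * f x) \<le> 2 powr r * (\<bar>x\<bar> powr r * f x + K powr r * f x)"
        using fnn[of x] unfolding r_def by (simp add: algebra_simps)
    qed
  qed measurable
qed

lemma G_cont: "q \<in> pdomain f \<Longrightarrow> isCont (\<lambda>\<nu>. Gf f \<nu> q) \<nu>0"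
  unfolding Gf_def by (intro continuous_intros A_cont B_cont)

lemma B_lim:
  assumes q: "q \<in> pdomain f"
  shows "(\<lambda>n. Bint f (- real n) q) \<longlonglongrightarrow> 0"
proof -
  have "(\<lambda>n. Bint f (- real n) q) \<longlonglongrightarrow> integral\<^sup>L (lborel::real measure) (\<lambda>x. 0::real)"
    unfolding Bint_def
  proof (rule dct_ev[where w="\<lambda>x. \<bar>x\<bar> powr (q - 1) * f x" and g="\<lambda>x. 0" and s="\<lambda>n x. max (- real n - x) 0 powr (q - 1) * f x"])
    show "integrable lborel (\<lambda>x. \<bar>x\<bar> powr (q - 1) * f x)" using pdom_int[OF q] .
    show "AE x in lborel. (\<lambda>n. max (- real n - x) 0 powr (q - 1) * f x) \<longlonglongrightarrow> 0"
    proof (intro AE_I2)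
      fix x
      obtain N :: nat where N: "real N > - x" using reals_Archimedean2 by blast
      have "eventually (\<lambda>n. max (- real n - x) 0 powr (q - 1) * f x = 0) sequentially"
        unfolding eventually_sequentially
      proof (intro exI[of _ N] allI impI)
        fix n assume "N \<le> n"
        then have "real N \<le> real n" by simp
        then have "max (- real n - x) 0 = 0" using N by auto
        then show "max (- real n - x) 0 powr (q - 1) * f x = 0" by simp
      qed
      then show "(\<lambda>n. max (- real n - x) 0 powr (q - 1) * f x) \<longlonglongrightarrow> 0"
        by (rule tendsto_eventually)
    qed
    show "\<forall>\<^sub>F n in sequentially. AE x in lborel. norm (max (- real n - x) 0 powr (q - 1) * f x)
            \<le> \<bar>x\<bar> powr (q - 1) * f x"
    proof (intro always_eventually allI AE_I2)
      fix n x
      have "max (- real n - x) 0 powr (q - 1) \<le> \<bar>x\<bar> powr (q - 1)"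
        by (rule powr_mono2) (use pdom_ge1[OF q] in auto)
      then show "norm (max (- real n - x) 0 powr (q - 1) * f x) \<le> \<bar>x\<bar> powr (q - 1) * f x"
        using fnn[of x] by (simp add: mult_right_mono)
    qed
  qed measurable
  then show ?thesis by simp
qed

lemma A_lim:
  assumes q: "q \<in> pdomain f"
  shows "(\<lambda>n. Aint f (real n) q) \<longlonglongrightarrow> 0"
proof -
  have "(\<lambda>n. Aint f (real n) q) \<longlonglongrightarrow> integral\<^sup>L (lborel::real measure) (\<lambda>x. 0::real)"
    unfolding Aint_def
  proof (rule dct_ev[where w="\<lambda>x. \<bar>x\<bar> powr (q - 1) * f x" and g="\<lambda>x. 0" and s="\<lambda>n x. max (x - real n) 0 powr (q - 1) * f x"])
    show "integrable lborel (\<lambda>x. \<bar>x\<bar> powr (q - 1) * f x)" using pdom_int[OF q] .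
    show "AE x in lborel. (\<lambda>n. max (x - real n) 0 powr (q - 1) * f x) \<longlonglongrightarrow> 0"
    proof (intro AE_I2)
      fix x
      obtain N :: nat where N: "real N > x" using reals_Archimedean2 by blast
      have "eventually (\<lambda>n. max (x - real n) 0 powr (q - 1) * f x = 0) sequentially"
        unfolding eventually_sequentially
      proof (intro exI[of _ N] allI impI)
        fix n assume "N \<le> n"
        then have "real N \<le> real n" by simp
        then have "max (x - real n) 0 = 0" using N by auto
        then show "max (x - real n) 0 powr (q - 1) * f x = 0" by simp
      qed
      then show "(\<lambda>n. max (x - real n) 0 powr (q - 1) * f x) \<longlonglongrightarrow> 0"
        by (rule tendsto_eventually)
    qed
    show "\<forall>\<^sub>F n in sequentially. AE x in lborel. norm (max (x - real n) 0 powr (q - 1) * f x)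
            \<le> \<bar>x\<bar> powr (q - 1) * f x"
    proof (intro always_eventually allI AE_I2)
      fix n x
      have "max (x - real n) 0 powr (q - 1) \<le> \<bar>x\<bar> powr (q - 1)"
        by (rule powr_mono2) (use pdom_ge1[OF q] in auto)
      then show "norm (max (x - real n) 0 powr (q - 1) * f x) \<le> \<bar>x\<bar> powr (q - 1) * f x"
        using fnn[of x] by (simp add: mult_right_mono)
    qed
  qed measurable
  then show ?thesis by simp
qed

lemma exists_inside: "\<exists>x0. L < ereal x0 \<and> ereal x0 < R"
  using ereal_dense2[OF LR] by auto

lemma G_root_exists:
  assumes q: "q \<in> pdomain f"
  shows "\<exists>\<nu>. Gf f \<nu> q = 0"
proof -
  obtain x0 where x0: "L < ereal x0" "ereal x0 < R" using exists_inside by auto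
  define a0 where "a0 = Aint f (x0 - 1) q"
  define b0 where "b0 = Bint f (x0 + 1) q"
  have a0: "a0 > 0" unfolding a0_def using A_pos[OF q x0] by auto
  have b0: "b0 > 0" unfolding b0_def using B_pos[OF q x0] by auto
  have e1: "eventually (\<lambda>n. Bint f (- real n) q < a0) sequentially"
    using order_tendstoD(2)[OF B_lim[OF q] a0] .
  have e2: "eventually (\<lambda>n. Aint f (real n) q < b0) sequentially"
    using order_tendstoD(2)[OF A_lim[OF q] b0] .
  obtain N :: nat where N: "real N > \<bar>x0\<bar> + 1" using reals_Archimedean2 by blast
  have e3: "eventually (\<lambda>n. real n > \<bar>x0\<bar> + 1) sequentially"
    unfolding eventually_sequentially
    by (rule exI[of _ N]) (use N in \<open>auto intro: less_le_trans\<close>)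
  from eventually_conj[OF e1 eventually_conj[OF e2 e3]]
  obtain n where n: "Bint f (- real n) q < a0" "Aint f (real n) q < b0" "real n > \<bar>x0\<bar> + 1"
    by (auto simp: eventually_sequentially)
  have "Aint f (x0 - 1) q \<le> Aint f (- real n) q" using A_mono[OF q, of "- real n" "x0 - 1"] n by auto
  then have g1: "Gf f (- real n) q \<ge> 0" using n(1) unfolding Gf_def a0_def by linarith
  have "Bint f (x0 + 1) q \<le> Bint f (real n) q" using B_mono[OF q, of "x0 + 1" "real n"] n by auto
  then have g2: "Gf f (real n) q \<le> 0" using n(2) unfolding Gf_def b0_def by linarith
  have "continuous_on {- real n..real n} (\<lambda>\<nu>. Gf f \<nu> q)"
    using G_cont[OF q] by (intro continuous_at_imp_continuous_on) auto
  then show ?thesis using IVT2'[of "\<lambda>\<nu>. Gf f \<nu> q" "real n" 0 "- real n"] g1 g2 by auto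
qed

lemma root_inside:
  assumes q: "q \<in> pdomain f" and r: "Gf f r q = 0"
  shows "L < ereal r" "ereal r < R"
proof -
  obtain x0 where x0: "L < ereal x0" "ereal x0 < R" using exists_inside by auto
  show "L < ereal r"
  proof (rule ccontr)
    assume "\<not> L < ereal r"
    then have le: "ereal r \<le> L" by (simp add: not_less)
    then have "ereal r < ereal x0" using x0(1) by (rule le_less_trans)
    then have "Aint f r q > 0" using A_pos[OF q x0] by simp
    moreover have "Bint f r q = 0" using B_zero[OF le] .
    ultimately show False using r unfolding Gf_def by simp
  qed
  show "ereal r < R"
  proof (rule ccontr)
    assume "\<not> ereal r < R"
    then have le: "R \<le> ereal r" by (simp add: not_less)
    then have "ereal x0 < ereal r" using x0(2) by (rule less_le_trans[rotated])
    then have "Bint f r q > 0" using B_pos[OF q x0] by simp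
    moreover have "Aint f r q = 0" using A_zero[OF le] .
    ultimately show False using r unfolding Gf_def by simp
  qed
qed

lemma root_unique:
  assumes q: "q \<in> pdomain f" and r: "Gf f r1 q = 0" "Gf f r2 q = 0"
  shows "r1 = r2"
proof (rule ccontr)
  assume ne: "r1 \<noteq> r2"
  define a where "a = min r1 r2"
  define b where "b = max r1 r2"
  have ab: "a < b" using ne unfolding a_def b_def by auto
  have ga: "Gf f a q = 0" "Gf f b q = 0" using r unfolding a_def b_def by (auto simp: min_def max_def)
  have "L < ereal a" using root_inside(1)[OF q ga(1)] .
  moreover have "ereal ((a + b) / 2) > ereal a" using ab by simp
  ultimately have l: "L < ereal ((a + b) / 2)" by (rule less_trans)
  have "ereal b < R" using root_inside(2)[OF q ga(2)] .
  moreover have "ereal ((a + b) / 2) < ereal b" using ab by simp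
  ultimately have rr: "ereal ((a + b) / 2) < R" by (meson less_trans)
  have "Gf f b q < Gf f a q" using G_strict[OF q l rr] ab by simp
  then show False using ga by simp
qed

lemma pmean_root:
  assumes q: "q \<in> pdomain f"
  shows "Gf f (pmean f q) q = 0"
proof -
  have ex: "\<exists>!\<nu>. Aint f \<nu> q = Bint f \<nu> q"
    using G_root_exists[OF q] root_unique[OF q] unfolding Gf_def by auto
  show ?thesis unfolding pmean_alt Gf_def using theI'[OF ex] by simp
qed

lemma pmean_inside:
  assumes q: "q \<in> pdomain f"
  shows "L < ereal (pmean f q)" "ereal (pmean f q) < R"
  using root_inside[OF q pmean_root[OF q]] by auto

lemma A_qlim:
  assumes e: "e \<in> pdomain f" and X: "\<And>i. X i \<in> pdomain f" "X \<longlonglongrightarrow> e"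
  shows "(\<lambda>i. Aint f \<nu> (X i)) \<longlonglongrightarrow> Aint f \<nu> e"
    and "(\<lambda>i. Bint f \<nu> (X i)) \<longlonglongrightarrow> Bint f \<nu> e"
proof -
  obtain M where M: "M \<in> pdomain f" "eventually (\<lambda>i. X i \<le> M) sequentially"
  proof (cases "\<exists>M\<in>pdomain f. M > e")
    case True
    then obtain M where "M \<in> pdomain f" "M > e" by auto
    moreover have "eventually (\<lambda>i. X i < M) sequentially" using order_tendstoD(2)[OF X(2) \<open>M > e\<close>] .
    then have "eventually (\<lambda>i. X i \<le> M) sequentially" by eventually_elim auto
    ultimately show ?thesis using that by auto
  next
    case False
    then have "eventually (\<lambda>i. X i \<le> e) sequentially" using X(1) by (auto simp: not_less)
    then show ?thesis using that e by auto
  qed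
  have M1: "M \<ge> 1" using pdom_ge1[OF M(1)] .
  have intw: "integrable lborel (\<lambda>x. (1 + \<bar>x - \<nu>\<bar> powr (M - 1)) * f x)"
    using fint int_absdiff[OF M(1), of \<nu>] by (simp add: distrib_right)
  show "(\<lambda>i. Aint f \<nu> (X i)) \<longlonglongrightarrow> Aint f \<nu> e"
    unfolding Aint_def
  proof (rule dct_ev[OF _ _ intw])
    show "AE x in lborel. (\<lambda>i. max (x - \<nu>) 0 powr (X i - 1) * f x) \<longlonglongrightarrow> max (x - \<nu>) 0 powr (e - 1) * f x"
      using AE_lborel_singleton[of \<nu>]
    proof eventually_elim
      case (elim x)
      have "(\<lambda>i. max (x - \<nu>) 0 powr (X i - 1)) \<longlonglongrightarrow> max (x - \<nu>) 0 powr (e - 1)"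
        using elim by (intro phi_tendsto tendsto_intros X(2)) auto
      then show ?case by (rule tendsto_mult[OF _ tendsto_const])
    qed
    show "\<forall>\<^sub>F i in sequentially. AE x in lborel. norm (max (x - \<nu>) 0 powr (X i - 1) * f x)
            \<le> (1 + \<bar>x - \<nu>\<bar> powr (M - 1)) * f x"
      using M(2)
    proof eventually_elim
      case (elim i)
      show ?case
      proof (intro AE_I2)
        fix x
        have "max (x - \<nu>) 0 powr (X i - 1) \<le> 1 + max (x - \<nu>) 0 powr (M - 1)"
          by (rule powr_le_1_plus) (use elim pdom_ge1[OF X(1)[of i]] in auto)
        also have "\<dots> \<le> 1 + \<bar>x - \<nu>\<bar> powr (M - 1)"
          using M1 by (intro add_left_mono powr_mono2) auto
        finally show "norm (max (x - \<nu>) 0 powr (X i - 1) * f x) \<le> (1 + \<bar>x - \<nu>\<bar> powr (M - 1)) * f x"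
          using fnn[of x] by (simp add: mult_right_mono)
      qed
    qed
  qed measurable
  show "(\<lambda>i. Bint f \<nu> (X i)) \<longlonglongrightarrow> Bint f \<nu> e"
    unfolding Bint_def
  proof (rule dct_ev[OF _ _ intw])
    show "AE x in lborel. (\<lambda>i. max (\<nu> - x) 0 powr (X i - 1) * f x) \<longlonglongrightarrow> max (\<nu> - x) 0 powr (e - 1) * f x"
      using AE_lborel_singleton[of \<nu>]
    proof eventually_elim
      case (elim x)
      have "(\<lambda>i. max (\<nu> - x) 0 powr (X i - 1)) \<longlonglongrightarrow> max (\<nu> - x) 0 powr (e - 1)"
        using elim by (intro phi_tendsto tendsto_intros X(2)) auto
      then show ?case by (rule tendsto_mult[OF _ tendsto_const])
    qed
    show "\<forall>\<^sub>F i in sequentially. AE x in lborel. norm (max (\<nu> - x) 0 powr (X i - 1) * f x)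
            \<le> (1 + \<bar>x - \<nu>\<bar> powr (M - 1)) * f x"
      using M(2)
    proof eventually_elim
      case (elim i)
      show ?case
      proof (intro AE_I2)
        fix x
        have "max (\<nu> - x) 0 powr (X i - 1) \<le> 1 + max (\<nu> - x) 0 powr (M - 1)"
          by (rule powr_le_1_plus) (use elim pdom_ge1[OF X(1)[of i]] in auto)
        also have "\<dots> \<le> 1 + \<bar>x - \<nu>\<bar> powr (M - 1)"
          using M1 by (intro add_left_mono powr_mono2) auto
        finally show "norm (max (\<nu> - x) 0 powr (X i - 1) * f x) \<le> (1 + \<bar>x - \<nu>\<bar> powr (M - 1)) * f x"
          using fnn[of x] by (simp add: mult_right_mono)
      qed
    qed
  qed measurable
qed

lemma G_qcont:
  assumes e: "e \<in> pdomain f"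
  shows "((\<lambda>q. Gf f \<nu> q) \<longlongrightarrow> Gf f \<nu> e) (at e within pdomain f)"
  unfolding tendsto_at_iff_sequentially
proof (intro allI impI)
  fix X assume X: "\<forall>i. X i \<in> pdomain f - {e}" "X \<longlonglongrightarrow> e"
  then have X1: "\<And>i. X i \<in> pdomain f" by auto
  show "((\<lambda>q. Gf f \<nu> q) \<circ> X) \<longlonglongrightarrow> Gf f \<nu> e"
    unfolding comp_def Gf_def using A_qlim[OF e X1 X(2)] by (intro tendsto_intros)
qed

lemma nu_cont:
  assumes e: "e \<in> pdomain f"
  shows "(pmean f \<longlongrightarrow> pmean f e) (at e within pdomain f)"
proof (rule tendstoI)
  fix \<epsilon> :: real assume eps: "\<epsilon> > 0"
  define m where "m = pmean f e"
  have m0: "Gf f m e = 0" using pmean_root[OF e] unfolding m_def .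
  have mL: "L < ereal m" and mR: "ereal m < R" using pmean_inside[OF e] unfolding m_def by auto
  obtain z1 where z1: "L < ereal z1" "ereal z1 < ereal m" using ereal_dense2[OF mL] by auto
  obtain z2 where z2: "ereal m < ereal z2" "ereal z2 < R" using ereal_dense2[OF mR] by auto
  define y1 where "y1 = max z1 (m - \<epsilon> / 2)"
  define y2 where "y2 = min z2 (m + \<epsilon> / 2)"
  have y1: "L < ereal y1" "ereal y1 < R" "m - \<epsilon> < y1" "y1 < m"
  proof -
    have "ereal z1 \<le> ereal y1" unfolding y1_def by simp
    then show "L < ereal y1" using z1(1) by (rule less_le_trans[rotated])
    show "y1 < m" using z1 eps unfolding y1_def by auto
    then have "ereal y1 < ereal m" by simp
    then show "ereal y1 < R" using mR by (rule less_trans)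
    show "m - \<epsilon> < y1" using eps unfolding y1_def by auto
  qed
  have y2: "L < ereal y2" "ereal y2 < R" "m < y2" "y2 < m + \<epsilon>"
  proof -
    have "ereal y2 \<le> ereal z2" unfolding y2_def by simp
    then show "ereal y2 < R" using z2(2) by (rule le_less_trans)
    show "m < y2" using z2 eps unfolding y2_def by auto
    then have "ereal m < ereal y2" by simp
    then show "L < ereal y2" using mL by (rule less_trans[rotated])
    show "y2 < m + \<epsilon>" using eps unfolding y2_def by auto
  qed
  have g1: "Gf f (m - \<epsilon>) e > 0" using G_strict[OF e y1(1,2,3,4)] m0 by simp
  have g2: "Gf f (m + \<epsilon>) e < 0" using G_strict[OF e y2(1,2,3,4)] m0 by simp
  have ev1: "eventually (\<lambda>q. Gf f (m - \<epsilon>) q > 0) (at e within pdomain f)"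
    using order_tendstoD(1)[OF G_qcont[OF e] g1] .
  have ev2: "eventually (\<lambda>q. Gf f (m + \<epsilon>) q < 0) (at e within pdomain f)"
    using order_tendstoD(2)[OF G_qcont[OF e] g2] .
  show "eventually (\<lambda>q. dist (pmean f q) (pmean f e) < \<epsilon>) (at e within pdomain f)"
    using ev1 ev2 eventually_in_within[of "pdomain f" e]
  proof eventually_elim
    case (elim q)
    have r: "Gf f (pmean f q) q = 0" using pmean_root[OF elim(3)] .
    have "m - \<epsilon> < pmean f q"
    proof (rule ccontr)
      assume "\<not> m - \<epsilon> < pmean f q"
      then have "Gf f (m - \<epsilon>) q \<le> Gf f (pmean f q) q" using G_mono[OF elim(3)] by (simp add: not_less)
      then show False using r elim(1) by simp
    qed
    moreover have "pmean f q < m + \<epsilon>"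
    proof (rule ccontr)
      assume "\<not> pmean f q < m + \<epsilon>"
      then have "Gf f (pmean f q) q \<le> Gf f (m + \<epsilon>) q" using G_mono[OF elim(3)] by (simp add: not_less)
      then show False using r elim(2) by simp
    qed
    ultimately show ?case unfolding m_def dist_real_def by auto
  qed
qed

end


definition lam :: "real \<Rightarrow> real \<Rightarrow> real" where
  "lam p u = (if u > 0 then u powr (p - 1) * ln u else 0)"
definition piq :: "real \<Rightarrow> real \<Rightarrow> real \<Rightarrow> real" where
  "piq p h u = (max u 0 powr (p + h - 1) - max u 0 powr (p - 1)) / h"

lemma deriv_powr_exp:
  assumes "u > 0"
  shows "((\<lambda>t. u powr (t - 1)) has_real_derivative u powr (t - 1) * ln u) (at t)"
  using assms by (auto intro!: derivative_eq_intros)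

lemma piq_mvt:
  assumes u: "u > 0" and h: "h \<noteq> 0"
  shows "\<exists>\<xi>. \<bar>\<xi> - p\<bar> \<le> \<bar>h\<bar> \<and> piq p h u = u powr (\<xi> - 1) * ln u"
proof -
  have der: "\<And>t. ((\<lambda>t. u powr (t - 1)) has_real_derivative u powr (t - 1) * ln u) (at t)"
    using deriv_powr_exp[OF u] .
  have mu: "max u 0 = u" using u by simp
  show ?thesis
  proof (cases "h > 0")
    case True
    obtain z where z: "p < z" "z < p + h" "u powr (p + h - 1) - u powr (p - 1) = (p + h - p) * (u powr (z - 1) * ln u)"
      using MVT2[of p "p + h" "\<lambda>t. u powr (t - 1)" "\<lambda>t. u powr (t - 1) * ln u"] der True by auto
    then show ?thesis unfolding piq_def mu using True
      by (intro exI[of _ z]) auto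
  next
    case False
    then have hn: "h < 0" using h by auto
    obtain z where z: "p + h < z" "z < p" "u powr (p - 1) - u powr (p + h - 1) = (p - (p + h)) * (u powr (z - 1) * ln u)"
      using MVT2[of "p + h" p "\<lambda>t. u powr (t - 1)" "\<lambda>t. u powr (t - 1) * ln u"] der hn by auto
    have "piq p h u = (u powr (p - 1) - u powr (p + h - 1)) / (- h)"
      unfolding piq_def mu using hn by (simp add: field_simps)
    also have "\<dots> = u powr (z - 1) * ln u" using z(3) hn by simp
    finally show ?thesis using z hn by (intro exI[of _ z]) auto
  qed
qed

lemma lnpow_bound:
  fixes u \<xi> a b e :: real
  assumes u: "u > 0" and e: "e > 0" and \<xi>: "a + e \<le> \<xi>" "\<xi> \<le> b - e"
  shows "\<bar>u powr (\<xi> - 1) * ln u\<bar> \<le> (u powr (a - 1) + u powr (b - 1)) / e"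
proof (cases "u \<le> 1")
  case True
  have lnn: "ln u \<le> 0" using True u by simp
  have w: "e * (- ln u) \<le> u powr (- e)"
  proof -
    have "ln (u powr (- e)) \<le> u powr (- e) - 1" using u by (intro ln_le_minus_one) simp
    moreover have "ln (u powr (- e)) = - e * ln u" by (rule ln_powr)
    ultimately show ?thesis by simp
  qed
  have p1: "u powr (\<xi> - 1) \<le> u powr (a - 1 + e)"
    using True u \<xi> by (intro powr_mono') auto
  have "\<bar>u powr (\<xi> - 1) * ln u\<bar> = u powr (\<xi> - 1) * (- ln u)" using lnn by (simp add: abs_mult)
  also have "\<dots> \<le> u powr (a - 1 + e) * (- ln u)"
    using p1 lnn by (intro mult_right_mono) auto
  also have "\<dots> = u powr (a - 1) * (u powr e * (- ln u))" by (simp add: powr_add)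
  also have "u powr e * (- ln u) \<le> u powr e * (u powr (- e) / e)"
    using w e by (intro mult_left_mono) (auto simp: field_simps)
  also have "u powr e * (u powr (- e) / e) = 1 / e"
    using u by (simp add: powr_add[symmetric])
  finally have "\<bar>u powr (\<xi> - 1) * ln u\<bar> \<le> u powr (a - 1) * (1 / e)"
    by (simp add: mult_left_mono)
  also have "\<dots> \<le> (u powr (a - 1) + u powr (b - 1)) / e"
    using e by (simp add: divide_right_mono)
  finally show ?thesis .
next
  case False
  then have u1: "u \<ge> 1" by simp
  have lnp: "ln u \<ge> 0" using u1 by simp
  have lb: "ln u \<le> u powr e / e" using ln_powr_bound[OF u1 e] .
  have p1: "u powr (\<xi> - 1) \<le> u powr (b - 1 - e)"
    using u1 \<xi> by (intro powr_mono) auto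
  have "\<bar>u powr (\<xi> - 1) * ln u\<bar> = u powr (\<xi> - 1) * ln u" using lnp by (simp add: abs_mult)
  also have "\<dots> \<le> u powr (b - 1 - e) * (u powr e / e)"
    using p1 lb lnp by (intro mult_mono) auto
  also have "\<dots> = u powr (b - 1) / e"
    using u by (simp add: powr_add[symmetric])
  also have "\<dots> \<le> (u powr (a - 1) + u powr (b - 1)) / e"
    using e by (simp add: divide_right_mono)
  finally show ?thesis .
qed

lemma piq_bound:
  assumes e: "e > 0" "a + 2 * e \<le> p" "p + 2 * e \<le> b" and h: "h \<noteq> 0" "\<bar>h\<bar> \<le> e"
  shows "\<bar>piq p h u\<bar> \<le> (\<bar>u\<bar> powr (a - 1) + \<bar>u\<bar> powr (b - 1)) / e"
proof (cases "u > 0")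
  case True
  obtain \<xi> where \<xi>: "\<bar>\<xi> - p\<bar> \<le> \<bar>h\<bar>" "piq p h u = u powr (\<xi> - 1) * ln u"
    using piq_mvt[OF True h(1)] by auto
  have "a + e \<le> \<xi>" "\<xi> \<le> b - e" using \<xi>(1) h e by auto
  then show ?thesis using \<xi>(2) lnpow_bound[OF True e(1)] True by auto
next
  case False
  then have "piq p h u = 0" unfolding piq_def by simp
  then show ?thesis using e by simp
qed

lemma piq_lim:
  assumes h: "\<And>i. h i \<noteq> 0" "h \<longlonglongrightarrow> 0"
  shows "(\<lambda>i. piq p (h i) u) \<longlonglongrightarrow> lam p u"
proof (cases "u > 0")
  case False
  then have "\<And>i. piq p (h i) u = 0" unfolding piq_def by simp
  moreover have "lam p u = 0" using False unfolding lam_def by simp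
  ultimately show ?thesis by simp
next
  case True
  have "\<forall>i. \<exists>\<xi>. \<bar>\<xi> - p\<bar> \<le> \<bar>h i\<bar> \<and> piq p (h i) u = u powr (\<xi> - 1) * ln u"
    using piq_mvt[OF True h(1)] by auto
  then obtain \<xi> where \<xi>: "\<And>i. \<bar>\<xi> i - p\<bar> \<le> \<bar>h i\<bar>" "\<And>i. piq p (h i) u = u powr (\<xi> i - 1) * ln u"
    by metis
  have "(\<lambda>i. \<xi> i - p) \<longlonglongrightarrow> 0"
  proof (rule Lim_null_comparison)
    show "\<forall>\<^sub>F i in sequentially. norm (\<xi> i - p) \<le> \<bar>h i\<bar>" using \<xi>(1) by auto
    show "(\<lambda>i. \<bar>h i\<bar>) \<longlonglongrightarrow> 0" using tendsto_rabs_zero[OF h(2)] .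
  qed
  then have "\<xi> \<longlonglongrightarrow> p" using LIM_zero_cancel by blast
  then have "(\<lambda>i. u powr (\<xi> i - 1) * ln u) \<longlonglongrightarrow> u powr (p - 1) * ln u"
    using True by (intro tendsto_intros) auto
  then show ?thesis using True \<xi>(2) unfolding lam_def by simp
qed

lemma lin4:
  fixes F1 F2 F3 F4 :: "real \<Rightarrow> real"
  assumes "integrable lborel F1" "integrable lborel F2" "integrable lborel F3" "integrable lborel F4"
  shows "(\<integral>x. ((F1 x - F3 x) / h - (F2 x - F4 x) / h) \<partial>lborel)
       = ((integral\<^sup>L lborel F1 - integral\<^sup>L lborel F2) - (integral\<^sup>L lborel F3 - integral\<^sup>L lborel F4)) / h"
proof -
  have "(\<lambda>x. ((F1 x - F3 x) / h - (F2 x - F4 x) / h)) = (\<lambda>x. ((F1 x - F2 x) - (F3 x - F4 x)) / h)"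
    by (auto simp: diff_divide_distrib)
  then have "(\<integral>x. ((F1 x - F3 x) / h - (F2 x - F4 x) / h) \<partial>lborel)
      = (\<integral>x. ((F1 x - F2 x) - (F3 x - F4 x)) \<partial>lborel) / h"
    by (simp add: integral_divide_zero)
  also have "(\<integral>x. ((F1 x - F2 x) - (F3 x - F4 x)) \<partial>lborel)
      = (\<integral>x. (F1 x - F2 x) \<partial>lborel) - (\<integral>x. (F3 x - F4 x) \<partial>lborel)"
    using assms by (intro Bochner_Integration.integral_diff) auto
  also have "(\<integral>x. (F1 x - F2 x) \<partial>lborel) = integral\<^sup>L lborel F1 - integral\<^sup>L lborel F2"
    using assms by (intro Bochner_Integration.integral_diff) auto
  also have "(\<integral>x. (F3 x - F4 x) \<partial>lborel) = integral\<^sup>L lborel F3 - integral\<^sup>L lborel F4"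
    using assms by (intro Bochner_Integration.integral_diff) auto
  finally show ?thesis .
qed

context dens begin

lemma G_pquot:
  assumes q: "q \<in> pdomain f" and p: "p \<in> pdomain f"
  shows "(Gf f c q - Gf f c p) / (q - p) = (\<integral>x. (piq p (q - p) (x - c) - piq p (q - p) (c - x)) * f x \<partial>lborel)"
proof -
  have e: "\<And>x. (piq p (q - p) (x - c) - piq p (q - p) (c - x)) * f x
     = ((max (x - c) 0 powr (q - 1) * f x - max (x - c) 0 powr (p - 1) * f x) / (q - p)
       - (max (c - x) 0 powr (q - 1) * f x - max (c - x) 0 powr (p - 1) * f x) / (q - p))"
    unfolding piq_def by (simp add: field_simps)
  show ?thesis unfolding e Gf_def Aint_def Bint_def
    by (rule lin4[symmetric]) (use int_phi[OF q] int_phi[OF p] in auto)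
qed

lemma P_lim:
  assumes a: "a \<in> pdomain f" and b: "b \<in> pdomain f"
    and e: "e > 0" "a + 2 * e \<le> p" "p + 2 * e \<le> b"
    and h: "\<And>i. h i \<noteq> 0" "\<And>i. \<bar>h i\<bar> \<le> e" "h \<longlonglongrightarrow> 0"
  shows "(\<lambda>i. (Gf f c (p + h i) - Gf f c p) / h i) \<longlonglongrightarrow> (\<integral>x. (lam p (x - c) - lam p (c - x)) * f x \<partial>lborel)"
proof -
  have a1: "a \<ge> 1" using pdom_ge1[OF a] .
  have pd: "p \<in> pdomain f" using pdom_down[OF b] a1 e by auto
  have qd: "\<And>i. p + h i \<in> pdomain f"
  proof -
    fix i
    have "- e \<le> h i" "h i \<le> e" using h(2)[of i] by (auto simp: abs_le_iff)
    then show "p + h i \<in> pdomain f" using pdom_down[OF b, of "p + h i"] a1 e by auto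
  qed
  have eq: "\<And>i. (Gf f c (p + h i) - Gf f c p) / h i = (\<integral>x. (piq p (h i) (x - c) - piq p (h i) (c - x)) * f x \<partial>lborel)"
    using G_pquot[OF qd pd] by simp
  define w where "w = (\<lambda>x. 2 * ((\<bar>x - c\<bar> powr (a - 1) * f x + \<bar>x - c\<bar> powr (b - 1) * f x) / e))"
  have intw: "integrable lborel w" unfolding w_def using int_absdiff[OF a] int_absdiff[OF b] by auto
  show ?thesis unfolding eq
  proof (rule dct_ev[OF _ _ intw])
    show "AE x in lborel. (\<lambda>i. (piq p (h i) (x - c) - piq p (h i) (c - x)) * f x) \<longlonglongrightarrow> (lam p (x - c) - lam p (c - x)) * f x"
      using h by (intro AE_I2 tendsto_intros piq_lim) auto
    show "\<forall>\<^sub>F i in sequentially. AE x in lborel. norm ((piq p (h i) (x - c) - piq p (h i) (c - x)) * f x) \<le> w x"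
    proof (intro always_eventually allI AE_I2)
      fix i x
      have b1: "\<bar>piq p (h i) (x - c)\<bar> \<le> (\<bar>x - c\<bar> powr (a - 1) + \<bar>x - c\<bar> powr (b - 1)) / e"
        using piq_bound[OF e h(1,2)] by simp
      have b2: "\<bar>piq p (h i) (c - x)\<bar> \<le> (\<bar>x - c\<bar> powr (a - 1) + \<bar>x - c\<bar> powr (b - 1)) / e"
        using piq_bound[OF e h(1,2), of i "c - x"] by (simp add: abs_minus_commute)
      have "\<bar>piq p (h i) (x - c) - piq p (h i) (c - x)\<bar> \<le> 2 * ((\<bar>x - c\<bar> powr (a - 1) + \<bar>x - c\<bar> powr (b - 1)) / e)"
        using b1 b2 by linarith
      then have "\<bar>piq p (h i) (x - c) - piq p (h i) (c - x)\<bar> * f x \<le> 2 * ((\<bar>x - c\<bar> powr (a - 1) + \<bar>x - c\<bar> powr (b - 1)) / e) * f x"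
        using fnn[of x] by (rule mult_right_mono)
      moreover have "norm ((piq p (h i) (x - c) - piq p (h i) (c - x)) * f x) = \<bar>piq p (h i) (x - c) - piq p (h i) (c - x)\<bar> * f x"
        using fnn[of x] by (simp add: abs_mult)
      moreover have "w x = 2 * ((\<bar>x - c\<bar> powr (a - 1) + \<bar>x - c\<bar> powr (b - 1)) / e) * f x"
        unfolding w_def using e(1) by (simp add: field_simps)
      ultimately show "norm ((piq p (h i) (x - c) - piq p (h i) (c - x)) * f x) \<le> w x"
        by simp
    qed
  qed (unfold lam_def piq_def; measurable)+
qed

end


definition kap :: "real \<Rightarrow> real \<Rightarrow> real \<Rightarrow> real" where
  "kap q \<Delta> u = (if \<Delta> = 0 then - (q - 1) * (if u > 0 then u powr (q - 2) else 0)
                  else (max (u - \<Delta>) 0 powr (q - 1) - max u 0 powr (q - 1)) / \<Delta>)"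

lemma deriv_powr_base:
  "0 < v \<Longrightarrow> ((\<lambda>v. v powr (q - 1)) has_real_derivative (q - 1) * v powr (q - 2)) (at v)"
  using has_real_derivative_powr[of v "q - 1"] by (simp add: algebra_simps)

lemma kap_mvt:
  assumes u: "u > 0" and d: "\<bar>\<Delta>\<bar> \<le> u / 2"
  shows "\<exists>\<xi>. \<bar>\<xi> - u\<bar> \<le> \<bar>\<Delta>\<bar> \<and> kap q \<Delta> u = - (q - 1) * \<xi> powr (q - 2)"
proof (cases "\<Delta> = 0")
  case True
  then show ?thesis using u unfolding kap_def by (intro exI[of _ u]) auto
next
  case False
  have pos: "u - \<Delta> > 0" using u d by auto
  have m1: "max (u - \<Delta>) 0 = u - \<Delta>" "max u 0 = u" using pos u by auto
  show ?thesis
  proof (cases "\<Delta> > 0")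
    case True
    obtain z where z: "u - \<Delta> < z" "z < u" "u powr (q - 1) - (u - \<Delta>) powr (q - 1) = (u - (u - \<Delta>)) * ((q - 1) * z powr (q - 2))"
      using MVT2[of "u - \<Delta>" u "\<lambda>v. v powr (q - 1)" "\<lambda>v. (q - 1) * v powr (q - 2)"] True pos
        deriv_powr_base by force
    have "kap q \<Delta> u = - (q - 1) * z powr (q - 2)"
      unfolding kap_def m1 using False z(3) by (simp add: field_simps)
    then show ?thesis using z True by (intro exI[of _ z]) auto
  next
    case F2: False
    then have neg: "\<Delta> < 0" using False by auto
    obtain z where z: "u < z" "z < u - \<Delta>" "(u - \<Delta>) powr (q - 1) - u powr (q - 1) = (u - \<Delta> - u) * ((q - 1) * z powr (q - 2))"
      using MVT2[of u "u - \<Delta>" "\<lambda>v. v powr (q - 1)" "\<lambda>v. (q - 1) * v powr (q - 2)"] neg u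
        deriv_powr_base by force
    have "kap q \<Delta> u = - (q - 1) * z powr (q - 2)"
      unfolding kap_def m1 using False z(3) by (simp add: field_simps)
    then show ?thesis using z neg by (intro exI[of _ z]) auto
  qed
qed

lemma kap_neg:
  assumes u: "u < 0" and d: "\<bar>\<Delta>\<bar> \<le> - u / 2"
  shows "kap q \<Delta> u = 0"
proof -
  have "max (u - \<Delta>) 0 = 0" "max u 0 = 0" using u d by auto
  then show ?thesis unfolding kap_def using u by simp
qed

lemma kap_lim:
  assumes d: "\<Delta> \<longlonglongrightarrow> 0" and q: "q \<longlonglongrightarrow> p" and u: "u \<noteq> 0"
  shows "(\<lambda>i. kap (q i) (\<Delta> i) u) \<longlonglongrightarrow> kap p 0 u"
proof -
  have ev: "eventually (\<lambda>i. \<bar>\<Delta> i\<bar> \<le> \<bar>u\<bar> / 2) sequentially"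
  proof -
    have "\<bar>u\<bar> / 2 > 0" using u by simp
    then have "eventually (\<lambda>i. dist (\<Delta> i) 0 < \<bar>u\<bar> / 2) sequentially"
      using d unfolding tendsto_iff by blast
    then have "eventually (\<lambda>i. norm (\<Delta> i) < \<bar>u\<bar> / 2) sequentially"
      by (simp add: dist_real_def)
    then show ?thesis by eventually_elim auto
  qed
  show ?thesis
  proof (cases "u > 0")
    case False
    then have un: "u < 0" using u by auto
    have "eventually (\<lambda>i. kap (q i) (\<Delta> i) u = 0) sequentially"
      using ev by eventually_elim (use un kap_neg in auto)
    moreover have "kap p 0 u = 0" using un unfolding kap_def by simp
    ultimately show ?thesis by (simp add: tendsto_eventually)
  next
    case True
    have "\<forall>i. \<exists>\<xi>. \<bar>\<xi> - u\<bar> \<le> \<bar>\<Delta> i\<bar> \<and> (\<bar>\<Delta> i\<bar> \<le> u / 2 \<longrightarrow> kap (q i) (\<Delta> i) u = - (q i - 1) * \<xi> powr (q i - 2))"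
    proof
      fix i
      show "\<exists>\<xi>. \<bar>\<xi> - u\<bar> \<le> \<bar>\<Delta> i\<bar> \<and> (\<bar>\<Delta> i\<bar> \<le> u / 2 \<longrightarrow> kap (q i) (\<Delta> i) u = - (q i - 1) * \<xi> powr (q i - 2))"
      proof (cases "\<bar>\<Delta> i\<bar> \<le> u / 2")
        case True
        then show ?thesis using kap_mvt[OF \<open>u > 0\<close> True, of "q i"] by blast
      next
        case False
        then show ?thesis by (intro exI[of _ u]) auto
      qed
    qed
    then obtain \<xi> where \<xi>: "\<And>i. \<bar>\<xi> i - u\<bar> \<le> \<bar>\<Delta> i\<bar>"
      "\<And>i. \<bar>\<Delta> i\<bar> \<le> u / 2 \<Longrightarrow> kap (q i) (\<Delta> i) u = - (q i - 1) * \<xi> i powr (q i - 2)"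
      by metis
    have "(\<lambda>i. \<xi> i - u) \<longlonglongrightarrow> 0"
    proof (rule Lim_null_comparison)
      show "\<forall>\<^sub>F i in sequentially. norm (\<xi> i - u) \<le> \<bar>\<Delta> i\<bar>" using \<xi>(1) by auto
      show "(\<lambda>i. \<bar>\<Delta> i\<bar>) \<longlonglongrightarrow> 0" using tendsto_rabs_zero[OF d] .
    qed
    then have xl: "\<xi> \<longlonglongrightarrow> u" using LIM_zero_cancel by blast
    have lim: "(\<lambda>i. - (q i - 1) * \<xi> i powr (q i - 2)) \<longlonglongrightarrow> - (p - 1) * u powr (p - 2)"
      using True by (intro tendsto_intros xl q) auto
    have evk: "eventually (\<lambda>i. kap (q i) (\<Delta> i) u = - (q i - 1) * \<xi> i powr (q i - 2)) sequentially"
      using ev by eventually_elim (use True \<xi>(2) in auto)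
    have "(\<lambda>i. kap (q i) (\<Delta> i) u) \<longlonglongrightarrow> - (p - 1) * u powr (p - 2)"
      using tendsto_cong[OF evk] lim by simp
    then show ?thesis using True unfolding kap_def by simp
  qed
qed


lemma le_mul1: "0 \<le> (x::real) \<Longrightarrow> 1 \<le> y \<Longrightarrow> x \<le> x * y"
  using mult_left_mono[of 1 y x] by simp

lemma half_powr:
  fixes u s :: real
  assumes "u > 0" "-1 \<le> s"
  shows "(u / 2) powr s \<le> 2 * u powr s"
proof -
  have "(u / 2) powr s = u powr s / 2 powr s" using assms by (simp add: powr_divide)
  also have "2 powr s \<ge> 2 powr (-1)" using assms by (intro powr_mono) auto
  then have "2 powr s \<ge> 1 / 2" by (simp add: powr_minus_divide)
  then have "u powr s / 2 powr s \<le> u powr s / (1 / 2)"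
    using assms by (intro divide_left_mono) auto
  finally show ?thesis by simp
qed

lemma kap_bound:
  fixes a b q \<Delta> u :: real
  assumes a: "1 < a" "a \<le> q" "q \<le> b" and u: "u \<noteq> 0" and d: "\<bar>\<Delta>\<bar> \<le> 1"
  shows "\<bar>kap q \<Delta> u\<bar> \<le> (2 * b * (2 + 2 powr b) * 3 powr b) * (\<bar>u\<bar> powr (min (a - 2) (- 1 / 2)) + \<bar>u\<bar> powr (b - 1))"
proof -
  define s0 where "s0 = min (a - 2) (- 1 / 2)"
  define t0 where "t0 = b - 1"
  define S where "S = \<bar>u\<bar> powr s0 + \<bar>u\<bar> powr t0"
  define K where "K = 2 * b * (2 + 2 powr b) * 3 powr b"
  have up: "\<bar>u\<bar> > 0" using u by simp
  have Ss: "\<And>s. s0 \<le> s \<Longrightarrow> s \<le> t0 \<Longrightarrow> \<bar>u\<bar> powr s \<le> S"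
    unfolding S_def using powr_sandwich[OF up] by blast
  have S1: "1 \<le> S" using Ss[of 0] a up unfolding s0_def t0_def by auto
  have Sq: "\<bar>u\<bar> powr (q - 2) \<le> S" using Ss[of "q - 2"] a unfolding s0_def t0_def by auto
  have b1: "b \<ge> 1" using a by auto
  have p2: "2 powr b \<ge> 1" "3 powr b \<ge> 1" using b1 by (auto intro: ge_one_powr_ge_zero)
  have X1: "1 \<le> b * (2 + 2 powr b)" using mult_mono[of 1 b 1 "2 + 2 powr b"] b1 p2 by auto
  have Kform: "K = (b * (2 + 2 powr b)) * (2 * 3 powr b)" unfolding K_def by (simp add: algebra_simps)
  have K2: "b * (2 + 2 powr b) \<le> K" unfolding Kform using X1 p2 by (intro le_mul1) auto
  have "b \<le> b * (2 + 2 powr b)" by (rule le_mul1) (use b1 p2 in auto)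
  then have K1: "b \<le> K" using K2 by linarith
  have K3: "2 * 3 powr b \<le> K" unfolding Kform using le_mul1[of "2 * 3 powr b" "b * (2 + 2 powr b)"] X1 p2
    by (simp add: algebra_simps)
  have S0: "S \<ge> 0" using S1 by simp
  have q1: "q - 1 \<ge> 0" "q - 1 \<le> b" using a by auto
  consider (z) "\<Delta> = 0" | (small) "\<Delta> \<noteq> 0" "\<bar>\<Delta>\<bar> \<le> \<bar>u\<bar> / 2" | (big) "\<bar>\<Delta>\<bar> > \<bar>u\<bar> / 2"
    by (cases "\<Delta> = 0"; cases "\<bar>\<Delta>\<bar> \<le> \<bar>u\<bar> / 2") auto
  then have "\<bar>kap q \<Delta> u\<bar> \<le> K * S"
  proof cases
    case z
    have "\<bar>kap q \<Delta> u\<bar> \<le> (q - 1) * \<bar>u\<bar> powr (q - 2)"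
      using z q1 by (auto simp: kap_def abs_mult)
    also have "\<dots> \<le> b * S" using q1 Sq by (intro mult_mono) auto
    also have "\<dots> \<le> K * S" using K1 S0 by (rule mult_right_mono)
    finally show ?thesis .
  next
    case small
    show ?thesis
    proof (cases "u > 0")
      case False
      then have "u < 0" using u by auto
      then have "kap q \<Delta> u = 0" using small by (intro kap_neg) auto
      then show ?thesis using K1 b1 S0 by simp
    next
      case True
      obtain \<xi> where \<xi>: "\<bar>\<xi> - u\<bar> \<le> \<bar>\<Delta>\<bar>" "kap q \<Delta> u = - (q - 1) * \<xi> powr (q - 2)"
        using kap_mvt[OF True, of \<Delta> q] small True by auto
      have xr: "u / 2 \<le> \<xi>" "\<xi> \<le> 2 * u" using \<xi>(1) small True by auto
      have xi: "\<xi> powr (q - 2) \<le> (2 + 2 powr b) * u powr (q - 2)"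
      proof (cases "q \<ge> 2")
        case True
        have "\<xi> powr (q - 2) \<le> (2 * u) powr (q - 2)" using xr True \<open>u > 0\<close> by (intro powr_mono2) auto
        also have "\<dots> = 2 powr (q - 2) * u powr (q - 2)" using \<open>u > 0\<close> by (simp add: powr_mult)
        also have "\<dots> \<le> 2 powr b * u powr (q - 2)" using a by (intro mult_right_mono powr_mono) auto
        also have "\<dots> \<le> (2 + 2 powr b) * u powr (q - 2)" by (intro mult_right_mono) auto
        finally show ?thesis .
      next
        case False
        have "\<xi> powr (q - 2) \<le> (u / 2) powr (q - 2)" using xr False \<open>u > 0\<close> by (intro powr_mono2') auto
        also have "\<dots> \<le> 2 * u powr (q - 2)" using half_powr[of u "q - 2"] \<open>u > 0\<close> a by auto
        also have "\<dots> \<le> (2 + 2 powr b) * u powr (q - 2)" by (intro mult_right_mono) auto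
        finally show ?thesis .
      qed
      have "\<bar>kap q \<Delta> u\<bar> = (q - 1) * \<xi> powr (q - 2)" using \<xi>(2) q1 by (simp add: abs_mult)
      also have "\<dots> \<le> b * ((2 + 2 powr b) * u powr (q - 2))" using q1 xi by (intro mult_mono) auto
      also have "\<dots> \<le> b * ((2 + 2 powr b) * S)" using Sq True b1 by (intro mult_left_mono) auto
      also have "\<dots> = (b * (2 + 2 powr b)) * S" by simp
      also have "\<dots> \<le> K * S" using K2 S0 by (rule mult_right_mono)
      finally show ?thesis .
    qed
  next
    case big
    have dn: "\<Delta> \<noteq> 0" using big up by auto
    have dp: "\<bar>\<Delta>\<bar> > 0" using dn by simp
    define \<phi>1 where "\<phi>1 = max (u - \<Delta>) 0 powr (q - 1)"
    define \<phi>0 where "\<phi>0 = max u 0 powr (q - 1)"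
    have e1: "\<phi>1 \<le> (3 * \<bar>\<Delta>\<bar>) powr (q - 1)" unfolding \<phi>1_def using big q1 by (intro powr_mono2) auto
    have e0: "\<phi>0 \<le> (3 * \<bar>\<Delta>\<bar>) powr (q - 1)" unfolding \<phi>0_def using big q1 by (intro powr_mono2) auto
    have n1: "\<phi>1 \<ge> 0" "\<phi>0 \<ge> 0" unfolding \<phi>1_def \<phi>0_def by auto
    have "\<bar>kap q \<Delta> u\<bar> = \<bar>\<phi>1 - \<phi>0\<bar> / \<bar>\<Delta>\<bar>" unfolding kap_def \<phi>1_def \<phi>0_def using dn by simp
    also have "\<dots> \<le> (3 * \<bar>\<Delta>\<bar>) powr (q - 1) / \<bar>\<Delta>\<bar>" using e1 e0 n1 dp by (intro divide_right_mono) auto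
    also have "(3 * \<bar>\<Delta>\<bar>) powr (q - 1) = 3 powr (q - 1) * (\<bar>\<Delta>\<bar> powr (q - 2) * \<bar>\<Delta>\<bar>)"
    proof -
      have "\<bar>\<Delta>\<bar> powr (q - 1) = \<bar>\<Delta>\<bar> powr ((q - 2) + 1)" by simp
      also have "\<dots> = \<bar>\<Delta>\<bar> powr (q - 2) * \<bar>\<Delta>\<bar> powr 1" by (rule powr_add)
      also have "\<dots> = \<bar>\<Delta>\<bar> powr (q - 2) * \<bar>\<Delta>\<bar>" by simp
      finally show ?thesis by (simp add: powr_mult)
    qed
    also have "3 powr (q - 1) * (\<bar>\<Delta>\<bar> powr (q - 2) * \<bar>\<Delta>\<bar>) / \<bar>\<Delta>\<bar> = 3 powr (q - 1) * \<bar>\<Delta>\<bar> powr (q - 2)"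
      using dp by simp
    also have "\<dots> \<le> 3 powr b * (2 * S)"
    proof (intro mult_mono)
      show "3 powr (q - 1) \<le> 3 powr b" using a by (intro powr_mono) auto
      show "\<bar>\<Delta>\<bar> powr (q - 2) \<le> 2 * S"
      proof (cases "q \<ge> 2")
        case True
        have "\<bar>\<Delta>\<bar> powr (q - 2) \<le> 1 powr (q - 2)" using True d by (intro powr_mono2) auto
        then show ?thesis using S1 by simp
      next
        case False
        have "\<bar>\<Delta>\<bar> powr (q - 2) \<le> (\<bar>u\<bar> / 2) powr (q - 2)" using False big up by (intro powr_mono2') auto
        also have "\<dots> \<le> 2 * \<bar>u\<bar> powr (q - 2)" using half_powr[OF up, of "q - 2"] a by auto
        also have "\<dots> \<le> 2 * S" using Sq by simp
        finally show ?thesis .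
      qed
    qed auto
    also have "\<dots> = (2 * 3 powr b) * S" by simp
    also have "\<dots> \<le> K * S" using K3 S0 by (rule mult_right_mono)
    finally show ?thesis .
  qed
  then show ?thesis unfolding K_def S_def s0_def t0_def .
qed


lemma int_powr_0r:
  fixes s r :: real
  assumes "s > -1" "r \<ge> 0"
  shows "integrable lborel (\<lambda>y. indicator {0..r} y * y powr s)"
proof -
  have "(\<lambda>y. y powr s) absolutely_integrable_on {0..r}"
    by (rule nonnegative_absolutely_integrable_1[OF integrable_on_powr_from_0]) (use assms in auto)
  then have "integrable lebesgue (\<lambda>y. indicator {0..r} y *\<^sub>R y powr s)"
    unfolding set_integrable_def .
  then have "integrable lborel (\<lambda>y. indicator {0..r} y *\<^sub>R y powr s)"
    by (subst (asm) integrable_completion) measurable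
  then show ?thesis by simp
qed

definition Qt :: "(real \<Rightarrow> real) \<Rightarrow> real \<Rightarrow> real \<Rightarrow> real \<Rightarrow> real" where
  "Qt f c \<Delta> q = (\<integral>x. (kap q \<Delta> (x - c) + kap q (- \<Delta>) (c - x)) * f x \<partial>lborel)"

context dens begin

lemma int_sing:
  assumes c: "L < ereal c" "ereal c < R" and s: "-1 < s" "s \<le> 0"
  shows "integrable lborel (\<lambda>x. \<bar>x - c\<bar> powr s * f x)"
proof -
  have "isCont f c"
    using fcont ereal_between_open c continuous_on_eq_continuous_at by blast
  then obtain r where r: "r > 0" "\<And>x'. dist x' c < r \<Longrightarrow> dist (f x') (f c) < 1"
    unfolding continuous_at_eps_delta by (meson zero_less_one)
  define M where "M = f c + 1"
  have fM: "\<And>x. \<bar>x - c\<bar> < r \<Longrightarrow> f x \<le> M"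
    using r(2) unfolding M_def dist_real_def by (smt (verit))
  define H where "H = (\<lambda>y. indicator {0..r} y * y powr s)"
  have iH: "integrable lborel H" unfolding H_def using int_powr_0r[of s r] s r by auto
  have i1: "integrable lborel (\<lambda>x. H (- c + 1 * x))"
    by (rule lborel_integrable_real_affine[OF iH]) simp
  have i2: "integrable lborel (\<lambda>x. H (c + (- 1) * x))"
    by (rule lborel_integrable_real_affine[OF iH]) simp
  have iw: "integrable lborel (\<lambda>x. M * (H (- c + 1 * x) + H (c + (- 1) * x)) + r powr s * f x)"
    using i1 i2 fint by auto
  show ?thesis
    using iw
  proof (rule Bochner_Integration.integrable_bound)
    show "AE x in lborel. norm (\<bar>x - c\<bar> powr s * f x) \<le> norm (M * (H (- c + 1 * x) + H (c + (- 1) * x)) + r powr s * f x)"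
    proof (intro AE_I2)
      fix x
      have H0: "H y \<ge> 0" for y unfolding H_def by auto
      have M0: "M \<ge> 0" unfolding M_def using fnn[of c] by simp
      have "\<bar>x - c\<bar> powr s * f x \<le> M * (H (- c + 1 * x) + H (c + (- 1) * x)) + r powr s * f x"
      proof (cases "\<bar>x - c\<bar> < r")
        case True
        have hh: "\<bar>x - c\<bar> powr s \<le> H (- c + 1 * x) + H (c + (- 1) * x)"
        proof (cases "x \<ge> c")
          case True
          then have "H (- c + 1 * x) = \<bar>x - c\<bar> powr s" unfolding H_def using \<open>\<bar>x - c\<bar> < r\<close> by auto
          then show ?thesis using H0[of "c + (- 1) * x"] by simp
        next
          case False
          then have "H (c + (- 1) * x) = \<bar>x - c\<bar> powr s" unfolding H_def using \<open>\<bar>x - c\<bar> < r\<close> by auto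
          then show ?thesis using H0[of "- c + 1 * x"] by simp
        qed
        have "\<bar>x - c\<bar> powr s * f x \<le> (H (- c + 1 * x) + H (c + (- 1) * x)) * M"
          using hh fM[OF True] fnn[of x] by (intro mult_mono) (auto simp: H0 add_nonneg_nonneg)
        moreover have "(H (- c + 1 * x) + H (c + (- 1) * x)) * M = M * (H (- c + 1 * x) + H (c + (- 1) * x))" by simp
        moreover have "r powr s * f x \<ge> 0" using fnn[of x] by simp
        ultimately show ?thesis by linarith
      next
        case False
        then have "\<bar>x - c\<bar> powr s \<le> r powr s" using r s by (intro powr_mono2') auto
        then have "\<bar>x - c\<bar> powr s * f x \<le> r powr s * f x" using fnn[of x] by (rule mult_right_mono)
        moreover have "M * (H (- c + 1 * x) + H (c + (- 1) * x)) \<ge> 0" using H0 M0 by simp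
        ultimately show ?thesis by linarith
      qed
      moreover have "M * (H (- c + 1 * x) + H (c + (- 1) * x)) + r powr s * f x \<ge> 0"
        using H0 fnn[of x] M_def fnn[of c] by (simp add: add_nonneg_nonneg)
      ultimately show "norm (\<bar>x - c\<bar> powr s * f x) \<le> norm (M * (H (- c + 1 * x) + H (c + (- 1) * x)) + r powr s * f x)"
        using fnn[of x] by (simp add: abs_mult)
    qed
  qed measurable
qed

lemma G_diff_Qt:
  assumes q: "q \<in> pdomain f"
  shows "Gf f (c + \<Delta>) q - Gf f c q = \<Delta> * Qt f c \<Delta> q"
proof (cases "\<Delta> = 0")
  case True
  then show ?thesis by simp
next
  case False
  have e: "\<And>x. (kap q \<Delta> (x - c) + kap q (- \<Delta>) (c - x)) * f x
     = ((max (x - (c + \<Delta>)) 0 powr (q - 1) * f x - max (x - c) 0 powr (q - 1) * f x) / \<Delta>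
       - (max ((c + \<Delta>) - x) 0 powr (q - 1) * f x - max (c - x) 0 powr (q - 1) * f x) / \<Delta>)"
    using False unfolding kap_def by (simp add: field_simps)
  have "Qt f c \<Delta> q = (Gf f (c + \<Delta>) q - Gf f c q) / \<Delta>"
    unfolding Qt_def e Gf_def Aint_def Bint_def
    by (rule lin4) (use int_phi[OF q] in auto)
  then show ?thesis using False by simp
qed

lemma Q_lim:
  assumes a: "a \<in> pdomain f" and b: "b \<in> pdomain f" and a1: "1 < a"
    and c: "L < ereal c" "ereal c < R"
    and d: "\<Delta> \<longlonglongrightarrow> 0" "\<And>i. \<bar>\<Delta> i\<bar> \<le> 1"
    and q: "q \<longlonglongrightarrow> p" "\<And>i. a \<le> q i" "\<And>i. q i \<le> b"
  shows "(\<lambda>i. Qt f c (\<Delta> i) (q i)) \<longlonglongrightarrow> Qt f c 0 p"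
proof -
  define K where "K = 2 * b * (2 + 2 powr b) * 3 powr b"
  define s0 where "s0 = min (a - 2) (- 1 / 2)"
  define w where "w = (\<lambda>x. 2 * K * (\<bar>x - c\<bar> powr s0 * f x + \<bar>x - c\<bar> powr (b - 1) * f x))"
  have intw: "integrable lborel w"
    unfolding w_def using int_sing[OF c, of s0] int_absdiff[OF b, of c] a1 unfolding s0_def by auto
  show ?thesis unfolding Qt_def
  proof (rule dct_ev[OF _ _ intw])
    show "AE x in lborel. (\<lambda>i. (kap (q i) (\<Delta> i) (x - c) + kap (q i) (- \<Delta> i) (c - x)) * f x)
        \<longlonglongrightarrow> (kap p 0 (x - c) + kap p (- 0) (c - x)) * f x"
      using AE_lborel_singleton[of c]
    proof eventually_elim
      case (elim x)
      have "(\<lambda>i. kap (q i) (\<Delta> i) (x - c)) \<longlonglongrightarrow> kap p 0 (x - c)"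
        using elim by (intro kap_lim d q) auto
      moreover have "(\<lambda>i. kap (q i) (- \<Delta> i) (c - x)) \<longlonglongrightarrow> kap p 0 (c - x)"
        using elim tendsto_minus[OF d(1)] by (intro kap_lim q) auto
      ultimately show ?case by (auto intro!: tendsto_intros)
    qed
    show "\<forall>\<^sub>F i in sequentially. AE x in lborel. norm ((kap (q i) (\<Delta> i) (x - c) + kap (q i) (- \<Delta> i) (c - x)) * f x) \<le> w x"
    proof (rule always_eventually, rule allI)
      fix i
      show "AE x in lborel. norm ((kap (q i) (\<Delta> i) (x - c) + kap (q i) (- \<Delta> i) (c - x)) * f x) \<le> w x"
        using AE_lborel_singleton[of c]
      proof eventually_elim
        case (elim x)
        have k1: "\<bar>kap (q i) (\<Delta> i) (x - c)\<bar> \<le> K * (\<bar>x - c\<bar> powr s0 + \<bar>x - c\<bar> powr (b - 1))"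
          unfolding K_def s0_def using kap_bound[OF a1 q(2,3), of "x - c" "\<Delta> i"] elim d(2) by auto
        have k2: "\<bar>kap (q i) (- \<Delta> i) (c - x)\<bar> \<le> K * (\<bar>x - c\<bar> powr s0 + \<bar>x - c\<bar> powr (b - 1))"
          unfolding K_def s0_def using kap_bound[OF a1 q(2,3), of "c - x" "- \<Delta> i"] elim d(2)
          by (auto simp: abs_minus_commute)
        have "\<bar>kap (q i) (\<Delta> i) (x - c) + kap (q i) (- \<Delta> i) (c - x)\<bar> \<le> 2 * K * (\<bar>x - c\<bar> powr s0 + \<bar>x - c\<bar> powr (b - 1))"
          using k1 k2 by linarith
        then have "\<bar>kap (q i) (\<Delta> i) (x - c) + kap (q i) (- \<Delta> i) (c - x)\<bar> * f x \<le> 2 * K * (\<bar>x - c\<bar> powr s0 + \<bar>x - c\<bar> powr (b - 1)) * f x"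
          using fnn[of x] by (rule mult_right_mono)
        moreover have "norm ((kap (q i) (\<Delta> i) (x - c) + kap (q i) (- \<Delta> i) (c - x)) * f x) = \<bar>kap (q i) (\<Delta> i) (x - c) + kap (q i) (- \<Delta> i) (c - x)\<bar> * f x"
          using fnn[of x] by (simp add: abs_mult)
        moreover have "w x = 2 * K * (\<bar>x - c\<bar> powr s0 + \<bar>x - c\<bar> powr (b - 1)) * f x"
          unfolding w_def by (simp add: algebra_simps)
        ultimately show ?case by simp
      qed
    qed
  qed (unfold kap_def; measurable)+
qed

lemma Qt0_neg:
  assumes a: "a \<in> pdomain f" and b: "b \<in> pdomain f" and a1: "1 < a" and p: "a \<le> p" "p \<le> b"
    and c: "L < ereal c" "ereal c < R"
  shows "Qt f c 0 p < 0"
proof -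
  define K where "K = 2 * b * (2 + 2 powr b) * 3 powr b"
  define s0 where "s0 = min (a - 2) (- 1 / 2)"
  have K0: "K \<ge> 0" unfolding K_def using a1 p by simp
  define g where "g = (\<lambda>x. - ((kap p 0 (x - c) + kap p 0 (c - x)) * f x))"
  have ge: "\<And>x. x \<noteq> c \<Longrightarrow> g x = (p - 1) * \<bar>x - c\<bar> powr (p - 2) * f x"
    unfolding g_def kap_def by (auto simp: abs_if algebra_simps)
  have gnn: "\<And>x. g x \<ge> 0"
  proof -
    fix x show "g x \<ge> 0"
    proof (cases "x = c")
      case True
      then show ?thesis by (simp add: g_def kap_def)
    next
      case False
      then show ?thesis using ge[OF False] fnn[of x] a1 p by simp
    qed
  qed
  have intw: "integrable lborel (\<lambda>x. 2 * K * (\<bar>x - c\<bar> powr s0 * f x + \<bar>x - c\<bar> powr (b - 1) * f x))"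
    using int_sing[OF c, of s0] int_absdiff[OF b, of c] a1 unfolding s0_def by auto
  have intg: "integrable lborel g"
    using intw
  proof (rule Bochner_Integration.integrable_bound)
    show "AE x in lborel. norm (g x) \<le> norm (2 * K * (\<bar>x - c\<bar> powr s0 * f x + \<bar>x - c\<bar> powr (b - 1) * f x))"
      using AE_lborel_singleton[of c]
    proof eventually_elim
      case (elim x)
      have k1: "\<bar>kap p 0 (x - c)\<bar> \<le> K * (\<bar>x - c\<bar> powr s0 + \<bar>x - c\<bar> powr (b - 1))"
        unfolding K_def s0_def using kap_bound[OF a1 p, of "x - c" 0] elim by auto
      have k2: "\<bar>kap p 0 (c - x)\<bar> \<le> K * (\<bar>x - c\<bar> powr s0 + \<bar>x - c\<bar> powr (b - 1))"
        unfolding K_def s0_def using kap_bound[OF a1 p, of "c - x" 0] elim by (auto simp: abs_minus_commute)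
      have "\<bar>kap p 0 (x - c) + kap p 0 (c - x)\<bar> * f x \<le> 2 * K * (\<bar>x - c\<bar> powr s0 + \<bar>x - c\<bar> powr (b - 1)) * f x"
        using k1 k2 fnn[of x] by (intro mult_right_mono) auto
      moreover have nn: "0 \<le> 2 * K * (\<bar>x - c\<bar> powr s0 + \<bar>x - c\<bar> powr (b - 1)) * f x"
        using k1 fnn[of x] K0 by (intro mult_nonneg_nonneg) auto
      moreover have "norm (2 * K * (\<bar>x - c\<bar> powr s0 * f x + \<bar>x - c\<bar> powr (b - 1) * f x))
          = 2 * K * (\<bar>x - c\<bar> powr s0 + \<bar>x - c\<bar> powr (b - 1)) * f x"
      proof -
        have e: "2 * K * (\<bar>x - c\<bar> powr s0 * f x + \<bar>x - c\<bar> powr (b - 1) * f x)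
          = 2 * K * (\<bar>x - c\<bar> powr s0 + \<bar>x - c\<bar> powr (b - 1)) * f x" by (simp add: algebra_simps)
        show ?thesis unfolding e real_norm_def using nn by (rule abs_of_nonneg)
      qed
      moreover have "norm (g x) = \<bar>kap p 0 (x - c) + kap p 0 (c - x)\<bar> * f x"
        unfolding g_def using fnn[of x] by (simp add: abs_mult)
      ultimately show ?case by simp
    qed
  qed (unfold g_def kap_def; measurable)
  have "integral\<^sup>L lborel g \<noteq> 0"
  proof
    assume "integral\<^sup>L lborel g = 0"
    then have "AE x in lborel. g x = 0" using integral_nonneg_eq_0_iff_AE[OF intg] gnn by auto
    then have "AE x in lborel. f x = 0" using AE_lborel_singleton[of c]
    proof eventually_elim
      case (elim x)
      then have "(p - 1) * \<bar>x - c\<bar> powr (p - 2) * f x = 0" using ge by simp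
      moreover have "(p - 1) * \<bar>x - c\<bar> powr (p - 2) > 0" using elim a1 p by auto
      ultimately show ?case by (metis mult_eq_0_iff less_irrefl)
    qed
    then have "(\<integral>x. f x \<partial>lborel) = 0" by (simp add: integral_eq_zero_AE)
    then show False using f1 by simp
  qed
  moreover have "integral\<^sup>L lborel g \<ge> 0" using gnn by simp
  ultimately have "integral\<^sup>L lborel g > 0" by simp
  moreover have "Qt f c 0 p = - integral\<^sup>L lborel g" unfolding Qt_def g_def by simp
  ultimately show ?thesis by simp
qed

end


lemma ftc_ln:
  fixes \<alpha> \<beta> :: real
  assumes "0 < \<alpha>" "\<alpha> \<le> \<beta>"
  shows "(\<integral>\<^sup>+t. ennreal (indicator {\<alpha>..\<beta>} t * (1 / t)) \<partial>lborel) = ennreal (ln \<beta> - ln \<alpha>)"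
proof (rule nn_integral_has_integral_lebesgue)
  show "\<And>x. x \<in> {\<alpha>..\<beta>} \<Longrightarrow> 0 \<le> 1 / x" using assms by auto
  show "((\<lambda>t. 1 / t) has_integral (ln \<beta> - ln \<alpha>)) {\<alpha>..\<beta>}"
  proof (rule fundamental_theorem_of_calculus[OF assms(2)])
    fix x assume "x \<in> {\<alpha>..\<beta>}"
    then have "x > 0" using assms by auto
    then show "(ln has_vector_derivative 1 / x) (at x within {\<alpha>..\<beta>})"
      by (auto intro!: derivative_eq_intros simp: has_real_derivative_iff_has_vector_derivative[symmetric])
  qed
qed

lemma ftc_ln':
  fixes \<alpha> \<beta> :: real
  assumes "0 < \<alpha>" "\<alpha> \<le> \<beta>"
  shows "(\<integral>\<^sup>+t. ennreal (indicator {\<alpha>..<\<beta>} t * (1 / t)) \<partial>lborel) = ennreal (ln \<beta> - ln \<alpha>)"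
proof -
  have "(\<integral>\<^sup>+t. ennreal (indicator {\<alpha>..<\<beta>} t * (1 / t)) \<partial>lborel) = (\<integral>\<^sup>+t. ennreal (indicator {\<alpha>..\<beta>} t * (1 / t)) \<partial>lborel)"
    using AE_lborel_singleton[of \<beta>] by (intro nn_integral_cong_AE) (auto elim!: eventually_mono simp: indicator_def)
  then show ?thesis using ftc_ln[OF assms] by simp
qed

locale pdens =
  fixes g :: "real \<Rightarrow> real"
  assumes gm[measurable]: "g \<in> borel_measurable borel"
    and gnn: "\<And>y. g y \<ge> 0"
    and gint: "integrable lborel g"
    and g1: "(\<integral>y. g y \<partial>lborel) = 1"
    and g0: "\<And>y. y \<le> 0 \<Longrightarrow> g y = 0"
    and glog: "integrable lborel (\<lambda>y. ln y * g y)"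
begin

abbreviation "F \<equiv> dens_cdf g"

lemma int_ind: "integrable lborel (\<lambda>y. indicator A y * g y)" if "A \<in> sets borel"
  using gint
proof (rule Bochner_Integration.integrable_bound)
  show "AE x in lborel. norm (indicator A x * g x) \<le> norm (g x)"
    by (intro AE_I2) (auto simp: indicator_def)
qed (use that in measurable)

lemma F_mono: "mono F"
proof (rule monoI)
  fix s t :: real assume "s \<le> t"
  then show "F s \<le> F t" unfolding dens_cdf_def
    by (intro integral_mono int_ind) (auto simp: indicator_def gnn)
qed

lemma F_meas[measurable]: "F \<in> borel_measurable borel"
  using F_mono by (rule borel_measurable_mono)

lemma F_bounds: "0 \<le> F t" "F t \<le> 1"
proof -
  show "0 \<le> F t" unfolding dens_cdf_def by (rule Bochner_Integration.integral_nonneg) (auto simp: gnn)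
  have "F t \<le> (\<integral>y. g y \<partial>lborel)" unfolding dens_cdf_def
    by (intro integral_mono int_ind gint) (auto simp: indicator_def gnn)
  then show "F t \<le> 1" using g1 by simp
qed

lemma F_zero: "t \<le> 0 \<Longrightarrow> F t = 0"
proof -
  assume t: "t \<le> 0"
  have h: "\<And>y. indicator {..t} y * g y = 0" using t g0 by (auto simp: indicator_def)
  show "F t = 0" unfolding dens_cdf_def h by simp
qed

lemma F_upper: "(\<integral>y. indicator {t<..} y * g y \<partial>lborel) = 1 - F t"
proof -
  have "(\<integral>y. indicator {t<..} y * g y \<partial>lborel) + F t = (\<integral>y. indicator {t<..} y * g y + indicator {..t} y * g y \<partial>lborel)"
    unfolding dens_cdf_def by (intro Bochner_Integration.integral_add[symmetric] int_ind) auto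
  also have "\<dots> = (\<integral>y. g y \<partial>lborel)" by (intro Bochner_Integration.integral_cong) (auto simp: indicator_def)
  finally show ?thesis using g1 by simp
qed

lemma F_cont: "isCont F t0"
proof (rule continuous_at_sequentiallyI)
  fix u assume u: "u \<longlonglongrightarrow> t0"
  show "(\<lambda>n. F (u n)) \<longlonglongrightarrow> F t0" unfolding dens_cdf_def
  proof (rule dct_ev[where w=g])
    show "AE y in lborel. (\<lambda>n. indicator {..u n} y * g y) \<longlonglongrightarrow> indicator {..t0} y * g y"
      using AE_lborel_singleton[of t0]
    proof eventually_elim
      case (elim y)
      show ?case
      proof (cases "y < t0")
        case True
        have "eventually (\<lambda>n. u n > y) sequentially" using order_tendstoD(1)[OF u True] .
        then have "eventually (\<lambda>n. indicator {..u n} y * g y = indicator {..t0} y * g y) sequentially"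
          by eventually_elim (use True in auto)
        then show ?thesis by (rule tendsto_eventually)
      next
        case False
        then have "y > t0" using elim by auto
        have "eventually (\<lambda>n. u n < y) sequentially" using order_tendstoD(2)[OF u \<open>y > t0\<close>] .
        then have "eventually (\<lambda>n. indicator {..u n} y * g y = indicator {..t0} y * g y) sequentially"
          by eventually_elim (use \<open>y > t0\<close> in auto)
        then show ?thesis by (rule tendsto_eventually)
      qed
    qed
    show "\<forall>\<^sub>F n in sequentially. AE y in lborel. norm (indicator {..u n} y * g y) \<le> g y"
      by (intro always_eventually allI AE_I2) (auto simp: indicator_def gnn)
  qed (use gint in measurable)
qed

definition pfun where "pfun t = (if 1 \<le> t then (1 - F t) / t else 0)"
definition nfun where "nfun t = (if 0 < t \<and> t < 1 then F t / t else 0)"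

lemma pfun_nn: "pfun t \<ge> 0" unfolding pfun_def using F_bounds[of t] by auto
lemma nfun_nn: "nfun t \<ge> 0" unfolding nfun_def using F_bounds[of t] by auto
lemma pfun_meas[measurable]: "pfun \<in> borel_measurable borel" unfolding pfun_def by measurable
lemma nfun_meas[measurable]: "nfun \<in> borel_measurable borel" unfolding nfun_def by measurable

lemma ennreal_div_split: "t > 0 \<Longrightarrow> ennreal (g y / t) = ennreal (1 / t) * ennreal (g y)"
  using gnn[of y] by (simp add: ennreal_mult[symmetric])

lemma ennreal_div_split2: "t > 0 \<Longrightarrow> ennreal (g y / t) = ennreal (g y) * ennreal (1 / t)"
  using gnn[of y] by (simp add: ennreal_mult[symmetric])

lemma pos_pt: "ennreal (max (ln y) 0 * g y) = (\<integral>\<^sup>+t. ennreal (if 1 \<le> t \<and> t < y then g y / t else 0) \<partial>lborel)"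
proof (cases "y > 1")
  case False
  have z1: "max (ln y) 0 * g y = 0"
  proof (cases "y > 0")
    case True
    then have "ln y \<le> 0" using False by simp
    then show ?thesis by simp
  next
    case False
    then show ?thesis using g0[of y] by simp
  qed
  moreover have z2: "\<And>t. (if 1 \<le> t \<and> t < y then g y / t else 0) = 0" using False by auto
  show ?thesis unfolding z1 z2 by simp
next
  case True
  have "(\<integral>\<^sup>+t. ennreal (if 1 \<le> t \<and> t < y then g y / t else 0) \<partial>lborel)
      = (\<integral>\<^sup>+t. ennreal (g y) * ennreal (indicator {1..<y} t * (1 / t)) \<partial>lborel)"
    by (intro nn_integral_cong) (auto simp: indicator_def ennreal_div_split2 gnn)
  also have "\<dots> = ennreal (g y) * (\<integral>\<^sup>+t. ennreal (indicator {1..<y} t * (1 / t)) \<partial>lborel)"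
    by (rule nn_integral_cmult) measurable
  also have "\<dots> = ennreal (g y) * ennreal (ln y - ln 1)" using ftc_ln'[of 1 y] True by simp
  also have "\<dots> = ennreal (max (ln y) 0 * g y)" using True gnn[of y] by (simp add: ennreal_mult''[symmetric] mult.commute)
  finally show ?thesis ..
qed

lemma neg_pt: "ennreal (max (- ln y) 0 * g y) = (\<integral>\<^sup>+t. ennreal (if 0 < t \<and> t < 1 \<and> y \<le> t then g y / t else 0) \<partial>lborel)"
proof (cases "0 < y \<and> y < 1")
  case False
  show ?thesis
  proof (cases "y \<le> 0")
    case True
    have z1: "max (- ln y) 0 * g y = 0" using g0[OF True] by simp
    have z2: "\<And>t. (if 0 < t \<and> t < 1 \<and> y \<le> t then g y / t else 0) = 0" using g0[OF True] by simp
    show ?thesis unfolding z1 z2 by simp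
  next
    case F2: False
    then have y1: "y \<ge> 1" using False by auto
    then have z1: "max (- ln y) 0 * g y = 0" by simp
    have z2: "\<And>t. (if 0 < t \<and> t < 1 \<and> y \<le> t then g y / t else 0) = 0" using y1 by auto
    show ?thesis unfolding z1 z2 by simp
  qed
next
  case True
  have "(\<integral>\<^sup>+t. ennreal (if 0 < t \<and> t < 1 \<and> y \<le> t then g y / t else 0) \<partial>lborel)
      = (\<integral>\<^sup>+t. ennreal (g y) * ennreal (indicator {y..<1} t * (1 / t)) \<partial>lborel)"
    using True by (intro nn_integral_cong) (auto simp: indicator_def ennreal_div_split2 gnn)
  also have "\<dots> = ennreal (g y) * (\<integral>\<^sup>+t. ennreal (indicator {y..<1} t * (1 / t)) \<partial>lborel)"
    by (rule nn_integral_cmult) measurable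
  also have "\<dots> = ennreal (g y) * ennreal (ln 1 - ln y)" using ftc_ln'[of y 1] True by simp
  also have "\<dots> = ennreal (max (- ln y) 0 * g y)" using True gnn[of y] by (simp add: ennreal_mult''[symmetric] mult.commute)
  finally show ?thesis ..
qed

lemma pos_inner: "(\<integral>\<^sup>+y. ennreal (if 1 \<le> t \<and> t < y then g y / t else 0) \<partial>lborel) = ennreal (pfun t)"
proof (cases "1 \<le> t")
  case False
  then show ?thesis unfolding pfun_def by simp
next
  case True
  have "(\<integral>\<^sup>+y. ennreal (if 1 \<le> t \<and> t < y then g y / t else 0) \<partial>lborel)
      = (\<integral>\<^sup>+y. ennreal (1 / t) * ennreal (indicator {t<..} y * g y) \<partial>lborel)"
    using True by (intro nn_integral_cong) (auto simp: indicator_def ennreal_div_split gnn)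
  also have "\<dots> = ennreal (1 / t) * (\<integral>\<^sup>+y. ennreal (indicator {t<..} y * g y) \<partial>lborel)"
    by (rule nn_integral_cmult) measurable
  also have "(\<integral>\<^sup>+y. ennreal (indicator {t<..} y * g y) \<partial>lborel) = ennreal (\<integral>y. indicator {t<..} y * g y \<partial>lborel)"
    by (rule nn_integral_eq_integral) (auto intro: int_ind simp: gnn)
  also have "(\<integral>y. indicator {t<..} y * g y \<partial>lborel) = 1 - F t" by (rule F_upper)
  also have "ennreal (1 / t) * ennreal (1 - F t) = ennreal (pfun t)"
    unfolding pfun_def using True F_bounds[of t] by (simp add: ennreal_mult''[symmetric])
  finally show ?thesis .
qed

lemma neg_inner: "(\<integral>\<^sup>+y. ennreal (if 0 < t \<and> t < 1 \<and> y \<le> t then g y / t else 0) \<partial>lborel) = ennreal (nfun t)"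
proof (cases "0 < t \<and> t < 1")
  case False
  then show ?thesis unfolding nfun_def by auto
next
  case True
  have "(\<integral>\<^sup>+y. ennreal (if 0 < t \<and> t < 1 \<and> y \<le> t then g y / t else 0) \<partial>lborel)
      = (\<integral>\<^sup>+y. ennreal (1 / t) * ennreal (indicator {..t} y * g y) \<partial>lborel)"
    using True by (intro nn_integral_cong) (auto simp: indicator_def ennreal_div_split gnn)
  also have "\<dots> = ennreal (1 / t) * (\<integral>\<^sup>+y. ennreal (indicator {..t} y * g y) \<partial>lborel)"
    by (rule nn_integral_cmult) measurable
  also have "(\<integral>\<^sup>+y. ennreal (indicator {..t} y * g y) \<partial>lborel) = ennreal (F t)"
    unfolding dens_cdf_def by (rule nn_integral_eq_integral) (auto intro: int_ind simp: gnn)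
  also have "ennreal (1 / t) * ennreal (F t) = ennreal (nfun t)"
    unfolding nfun_def using True F_bounds[of t] by (simp add: ennreal_mult''[symmetric])
  finally show ?thesis .
qed

lemma pos_rep: "(\<integral>\<^sup>+y. ennreal (max (ln y) 0 * g y) \<partial>lborel) = (\<integral>\<^sup>+t. ennreal (pfun t) \<partial>lborel)"
proof -
  have "(\<integral>\<^sup>+y. ennreal (max (ln y) 0 * g y) \<partial>lborel)
     = (\<integral>\<^sup>+y. (\<integral>\<^sup>+t. ennreal (if 1 \<le> t \<and> t < y then g y / t else 0) \<partial>lborel) \<partial>lborel)"
    by (intro nn_integral_cong) (rule pos_pt)
  also have "\<dots> = (\<integral>\<^sup>+t. (\<integral>\<^sup>+y. ennreal (if 1 \<le> t \<and> t < y then g y / t else 0) \<partial>lborel) \<partial>lborel)"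
    by (rule lborel_pair.Fubini') measurable
  also have "\<dots> = (\<integral>\<^sup>+t. ennreal (pfun t) \<partial>lborel)"
    by (intro nn_integral_cong) (rule pos_inner)
  finally show ?thesis .
qed

lemma neg_rep: "(\<integral>\<^sup>+y. ennreal (max (- ln y) 0 * g y) \<partial>lborel) = (\<integral>\<^sup>+t. ennreal (nfun t) \<partial>lborel)"
proof -
  have "(\<integral>\<^sup>+y. ennreal (max (- ln y) 0 * g y) \<partial>lborel)
     = (\<integral>\<^sup>+y. (\<integral>\<^sup>+t. ennreal (if 0 < t \<and> t < 1 \<and> y \<le> t then g y / t else 0) \<partial>lborel) \<partial>lborel)"
    by (intro nn_integral_cong) (rule neg_pt)
  also have "\<dots> = (\<integral>\<^sup>+t. (\<integral>\<^sup>+y. ennreal (if 0 < t \<and> t < 1 \<and> y \<le> t then g y / t else 0) \<partial>lborel) \<partial>lborel)"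
    by (rule lborel_pair.Fubini') measurable
  also have "\<dots> = (\<integral>\<^sup>+t. ennreal (nfun t) \<partial>lborel)"
    by (intro nn_integral_cong) (rule neg_inner)
  finally show ?thesis .
qed

lemma int_max_ln: "integrable lborel (\<lambda>y. max (ln y) 0 * g y)" "integrable lborel (\<lambda>y. max (- ln y) 0 * g y)"
proof -
  show "integrable lborel (\<lambda>y. max (ln y) 0 * g y)"
    using glog
  proof (rule Bochner_Integration.integrable_bound)
    show "AE x in lborel. norm (max (ln x) 0 * g x) \<le> norm (ln x * g x)"
    proof (intro AE_I2)
      fix x :: real
      have "\<bar>max (ln x) 0\<bar> \<le> \<bar>ln x\<bar>" by (cases "0 \<le> ln x") (simp_all add: max_def)
      then show "norm (max (ln x) 0 * g x) \<le> norm (ln x * g x)"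
        using gnn[of x] by (simp add: abs_mult mult_right_mono)
    qed
  qed measurable
  show "integrable lborel (\<lambda>y. max (- ln y) 0 * g y)"
    using glog
  proof (rule Bochner_Integration.integrable_bound)
    show "AE x in lborel. norm (max (- ln x) 0 * g x) \<le> norm (ln x * g x)"
    proof (intro AE_I2)
      fix x :: real
      have "\<bar>max (- ln x) 0\<bar> \<le> \<bar>ln x\<bar>" by (cases "0 \<le> ln x") (simp_all add: max_def)
      then show "norm (max (- ln x) 0 * g x) \<le> norm (ln x * g x)"
        using gnn[of x] by (simp add: abs_mult mult_right_mono)
    qed
  qed measurable
qed

lemma transfer_rep:
  fixes h k :: "real \<Rightarrow> real"
  assumes hi: "integrable lborel h" and hn: "\<And>y. h y \<ge> 0" and km[measurable]: "k \<in> borel_measurable borel"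
    and kn: "\<And>t. k t \<ge> 0"
    and eq: "(\<integral>\<^sup>+y. ennreal (h y) \<partial>lborel) = (\<integral>\<^sup>+t. ennreal (k t) \<partial>lborel)"
  shows "integrable lborel k" "integral\<^sup>L lborel k = integral\<^sup>L lborel h"
proof -
  have e1: "(\<integral>\<^sup>+y. ennreal (h y) \<partial>lborel) = ennreal (integral\<^sup>L lborel h)"
    using hi hn by (intro nn_integral_eq_integral) auto
  show ik: "integrable lborel k"
    using kn by (intro integrableI_nonneg) (auto simp: eq[symmetric] e1)
  have "ennreal (integral\<^sup>L lborel k) = (\<integral>\<^sup>+t. ennreal (k t) \<partial>lborel)"
    using ik kn by (intro nn_integral_eq_integral[symmetric]) auto
  also have "\<dots> = ennreal (integral\<^sup>L lborel h)" using eq e1 by simp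
  finally show "integral\<^sup>L lborel k = integral\<^sup>L lborel h"
    using hn kn by (subst (asm) ennreal_inj) (auto intro: Bochner_Integration.integral_nonneg)
qed

lemma log_rep:
  shows "integrable lborel pfun" "integrable lborel nfun"
    "(\<integral>y. ln y * g y \<partial>lborel) = integral\<^sup>L lborel pfun - integral\<^sup>L lborel nfun"
proof -
  have t1: "integrable lborel pfun" "integral\<^sup>L lborel pfun = (\<integral>y. max (ln y) 0 * g y \<partial>lborel)"
    using transfer_rep[OF int_max_ln(1) _ pfun_meas pfun_nn pos_rep] gnn by auto
  have t2: "integrable lborel nfun" "integral\<^sup>L lborel nfun = (\<integral>y. max (- ln y) 0 * g y \<partial>lborel)"
    using transfer_rep[OF int_max_ln(2) _ nfun_meas nfun_nn neg_rep] gnn by auto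
  show "integrable lborel pfun" "integrable lborel nfun" using t1 t2 by auto
  have "(\<integral>y. ln y * g y \<partial>lborel) = (\<integral>y. max (ln y) 0 * g y - max (- ln y) 0 * g y \<partial>lborel)"
    by (intro Bochner_Integration.integral_cong) (auto simp: max_def algebra_simps)
  also have "\<dots> = (\<integral>y. max (ln y) 0 * g y \<partial>lborel) - (\<integral>y. max (- ln y) 0 * g y \<partial>lborel)"
    using int_max_ln by (rule Bochner_Integration.integral_diff)
  finally show "(\<integral>y. ln y * g y \<partial>lborel) = integral\<^sup>L lborel pfun - integral\<^sup>L lborel nfun"
    using t1 t2 by simp
qed

end

lemma dom_ln:
  assumes Y: "pdens gY" and Z: "pdens gZ" and dom: "strict_stoch_dom gY gZ"
  shows "(\<integral>y. ln y * gZ y \<partial>lborel) < (\<integral>y. ln y * gY y \<partial>lborel)"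
proof -
  interpret Y: pdens gY by (rule Y)
  interpret Z: pdens gZ by (rule Z)
  have le: "\<And>x. dens_cdf gY x \<le> dens_cdf gZ x" and ne: "dens_cdf gZ \<noteq> dens_cdf gY"
    using dom unfolding strict_stoch_dom_def by auto
  define \<psi> where "\<psi> = (\<lambda>t. (Y.pfun t - Z.pfun t) + (Z.nfun t - Y.nfun t))"
  have \<psi>e: "\<And>t. \<psi> t = (if 0 < t then (dens_cdf gZ t - dens_cdf gY t) / t else 0)"
    unfolding \<psi>_def Y.pfun_def Z.pfun_def Y.nfun_def Z.nfun_def by (auto simp: field_simps)
  have \<psi>n: "\<And>t. \<psi> t \<ge> 0" unfolding \<psi>e using le by (auto intro!: divide_nonneg_pos)
  have i\<psi>: "integrable lborel \<psi>" unfolding \<psi>_def using Y.log_rep Z.log_rep by auto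
  have diff: "(\<integral>y. ln y * gY y \<partial>lborel) - (\<integral>y. ln y * gZ y \<partial>lborel) = integral\<^sup>L lborel \<psi>"
  proof -
    have "integral\<^sup>L lborel \<psi> = (integral\<^sup>L lborel Y.pfun - integral\<^sup>L lborel Z.pfun) + (integral\<^sup>L lborel Z.nfun - integral\<^sup>L lborel Y.nfun)"
      unfolding \<psi>_def using Y.log_rep Z.log_rep by simp
    then show ?thesis using Y.log_rep(3) Z.log_rep(3) by simp
  qed
  obtain t0 where t0: "dens_cdf gZ t0 \<noteq> dens_cdf gY t0" using ne by auto
  define \<eta> where "\<eta> = dens_cdf gZ t0 - dens_cdf gY t0"
  have eta: "\<eta> > 0" using le[of t0] t0 unfolding \<eta>_def by auto
  have t0p: "t0 > 0"
  proof (rule ccontr)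
    assume "\<not> t0 > 0"
    then show False using Y.F_zero[of t0] Z.F_zero[of t0] t0 by auto
  qed
  have "isCont (\<lambda>t. dens_cdf gZ t - dens_cdf gY t) t0"
    by (intro continuous_intros Y.F_cont Z.F_cont)
  then obtain \<delta> where \<delta>: "\<delta> > 0" "\<And>t. dist t t0 < \<delta> \<Longrightarrow> dist (dens_cdf gZ t - dens_cdf gY t) \<eta> < \<eta> / 2"
    unfolding continuous_at_eps_delta \<eta>_def using eta unfolding \<eta>_def by (meson half_gt_zero)
  define d where "d = min (\<delta> / 2) (t0 / 2)"
  have d: "d > 0" "d < \<delta>" "d \<le> t0 / 2" using \<delta> t0p unfolding d_def by auto
  define c where "c = (\<eta> / 2) / (2 * t0)"
  have c: "c > 0" unfolding c_def using eta t0p by auto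
  have "(\<integral>t. c * indicator {t0 - d..t0 + d} t \<partial>lborel) \<le> integral\<^sup>L lborel \<psi>"
  proof (rule integral_mono[OF integrable_const_indicator i\<psi>])
    fix t
    show "c * indicator {t0 - d..t0 + d} t \<le> \<psi> t"
    proof (cases "t \<in> {t0 - d..t0 + d}")
      case True
      then have tt: "t > 0" "t \<le> 2 * t0" "dist t t0 < \<delta>" using d t0p by (auto simp: dist_real_def)
      have "\<bar>(dens_cdf gZ t - dens_cdf gY t) - \<eta>\<bar> < \<eta> / 2" using \<delta>(2)[OF tt(3)] by (simp add: dist_real_def)
      then have h: "dens_cdf gZ t - dens_cdf gY t \<ge> \<eta> / 2" by linarith
      have "c \<le> (\<eta> / 2) / t" unfolding c_def using tt eta by (intro divide_left_mono) auto
      also have "\<dots> \<le> (dens_cdf gZ t - dens_cdf gY t) / t" using h tt by (intro divide_right_mono) auto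
      finally show ?thesis using True tt unfolding \<psi>e by simp
    next
      case False
      then show ?thesis using \<psi>n[of t] by simp
    qed
  qed
  moreover have "(\<integral>t. c * indicator {t0 - d..t0 + d} t \<partial>lborel) > 0"
    using c d by (simp add: integral_const_indicator)
  ultimately show ?thesis using diff by linarith
qed


lemma ereal_minus_L: "(ereal y < ereal \<nu> - L) \<longleftrightarrow> (L < ereal (\<nu> - y))"
  by (cases L) auto

lemma ereal_R_minus: "(ereal y < R - ereal \<nu>) \<longleftrightarrow> (ereal (\<nu> + y) < R)"
  by (cases R) auto

context dens begin

lemma lam_int:
  assumes a: "a \<in> pdomain f" and b: "b \<in> pdomain f" and e: "e > 0" "a + e \<le> p" "p \<le> b - e"
  shows "integrable lborel (\<lambda>x. lam p (x - c) * f x)" "integrable lborel (\<lambda>x. lam p (c - x) * f x)"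
proof -
  have iw: "integrable lborel (\<lambda>x. (\<bar>x - c\<bar> powr (a - 1) * f x + \<bar>x - c\<bar> powr (b - 1) * f x) / e)"
    using int_absdiff[OF a, of c] int_absdiff[OF b, of c] by auto
  have bnd: "\<bar>lam p u\<bar> \<le> (\<bar>u\<bar> powr (a - 1) + \<bar>u\<bar> powr (b - 1)) / e" for u
  proof (cases "u > 0")
    case True
    then show ?thesis unfolding lam_def using lnpow_bound[OF True e(1) e(2,3)] by simp
  next
    case False
    then show ?thesis unfolding lam_def using e by simp
  qed
  show "integrable lborel (\<lambda>x. lam p (x - c) * f x)"
    using iw
  proof (rule Bochner_Integration.integrable_bound)
    show "AE x in lborel. norm (lam p (x - c) * f x) \<le> norm ((\<bar>x - c\<bar> powr (a - 1) * f x + \<bar>x - c\<bar> powr (b - 1) * f x) / e)"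
    proof (intro AE_I2)
      fix x
      have "\<bar>lam p (x - c)\<bar> * f x \<le> (\<bar>x - c\<bar> powr (a - 1) + \<bar>x - c\<bar> powr (b - 1)) / e * f x"
        using bnd[of "x - c"] fnn[of x] by (rule mult_right_mono)
      then show "norm (lam p (x - c) * f x) \<le> norm ((\<bar>x - c\<bar> powr (a - 1) * f x + \<bar>x - c\<bar> powr (b - 1) * f x) / e)"
        using fnn[of x] e by (simp add: abs_mult field_simps)
    qed
  qed (unfold lam_def; measurable)
  show "integrable lborel (\<lambda>x. lam p (c - x) * f x)"
    using iw
  proof (rule Bochner_Integration.integrable_bound)
    show "AE x in lborel. norm (lam p (c - x) * f x) \<le> norm ((\<bar>x - c\<bar> powr (a - 1) * f x + \<bar>x - c\<bar> powr (b - 1) * f x) / e)"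
    proof (intro AE_I2)
      fix x
      have "\<bar>lam p (c - x)\<bar> * f x \<le> (\<bar>x - c\<bar> powr (a - 1) + \<bar>x - c\<bar> powr (b - 1)) / e * f x"
        using bnd[of "c - x"] fnn[of x] unfolding abs_minus_commute[of c x] by (rule mult_right_mono)
      then show "norm (lam p (c - x) * f x) \<le> norm ((\<bar>x - c\<bar> powr (a - 1) * f x + \<bar>x - c\<bar> powr (b - 1) * f x) / e)"
        using fnn[of x] e by (simp add: abs_mult field_simps)
    qed
  qed (unfold lam_def; measurable)
qed

lemma Hp_eq:
  "Hp f L p = (\<integral>y. max y 0 powr (p - 1) * f (pmean f p - y) \<partial>lborel)"
  unfolding Hp_def
proof (intro Bochner_Integration.integral_cong refl)
  fix y
  show "indicator {y. 0 < y \<and> ereal y < ereal (pmean f p) - L} y * y powr (p - 1) * f (pmean f p - y)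
      = max y 0 powr (p - 1) * f (pmean f p - y)"
  proof (cases "y > 0")
    case True
    show ?thesis
    proof (cases "L < ereal (pmean f p - y)")
      case True
      then show ?thesis using \<open>y > 0\<close> by (simp add: ereal_minus_L)
    next
      case False
      then have "f (pmean f p - y) = 0" by (intro fout) simp
      then show ?thesis by simp
    qed
  next
    case False
    then show ?thesis by simp
  qed
qed

lemma dens_minus_eq:
  "dens_minus f L p y = max y 0 powr (p - 1) * f (pmean f p - y) / Hp f L p"
proof (cases "y > 0")
  case True
  show ?thesis
  proof (cases "L < ereal (pmean f p - y)")
    case True
    then show ?thesis using \<open>y > 0\<close> unfolding dens_minus_def by (simp add: ereal_minus_L)
  next
    case False
    then have "f (pmean f p - y) = 0" by (intro fout) simp
    then show ?thesis unfolding dens_minus_def by simp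
  qed
next
  case False
  then show ?thesis unfolding dens_minus_def by simp
qed

lemma dens_plus_eq:
  "dens_plus f L R p y = max y 0 powr (p - 1) * f (pmean f p + y) / Hp f L p"
proof (cases "y > 0")
  case True
  show ?thesis
  proof (cases "ereal (pmean f p + y) < R")
    case True
    then show ?thesis using \<open>y > 0\<close> unfolding dens_plus_def by (simp add: ereal_R_minus)
  next
    case False
    then have "f (pmean f p + y) = 0" by (intro fout) simp
    then show ?thesis unfolding dens_plus_def by simp
  qed
next
  case False
  then show ?thesis unfolding dens_plus_def by simp
qed

lemma shift_plus:
  fixes F :: "real \<Rightarrow> real"
  shows "(\<integral>y. F (c + y) \<partial>lborel) = (\<integral>x. F x \<partial>lborel)"
    "integrable lborel (\<lambda>y. F (c + y)) \<longleftrightarrow> integrable lborel F"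
  using lborel_integral_real_affine[of 1 F c] lborel_integrable_real_affine_iff[of 1 F c] by auto

lemma shift_minus:
  fixes F :: "real \<Rightarrow> real"
  shows "(\<integral>y. F (c - y) \<partial>lborel) = (\<integral>x. F x \<partial>lborel)"
    "integrable lborel (\<lambda>y. F (c - y)) \<longleftrightarrow> integrable lborel F"
  using lborel_integral_real_affine[of "-1" F c] lborel_integrable_real_affine_iff[of "-1" F c] by auto


lemma P_pos:
  assumes p: "p \<in> pdomain f" and a: "a \<in> pdomain f" and b: "b \<in> pdomain f"
    and e: "e > 0" "a + e \<le> p" "p \<le> b - e"
    and dom: "strict_stoch_dom (dens_plus f L R p) (dens_minus f L p)"
  shows "(\<integral>x. (lam p (x - pmean f p) - lam p (pmean f p - x)) * f x \<partial>lborel) > 0"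
proof -
  define \<nu>0 where "\<nu>0 = pmean f p"
  define H where "H = Hp f L p"
  have root: "Gf f \<nu>0 p = 0" unfolding \<nu>0_def using pmean_root[OF p] .
  have ins: "L < ereal \<nu>0" "ereal \<nu>0 < R" unfolding \<nu>0_def using pmean_inside[OF p] by auto
  have HB: "H = Bint f \<nu>0 p"
  proof -
    have "H = (\<integral>y. max y 0 powr (p - 1) * f (\<nu>0 - y) \<partial>lborel)" unfolding H_def \<nu>0_def by (rule Hp_eq)
    also have "\<dots> = (\<integral>y. (\<lambda>x. max (\<nu>0 - x) 0 powr (p - 1) * f x) (\<nu>0 - y) \<partial>lborel)" by simp
    also have "\<dots> = Bint f \<nu>0 p" unfolding Bint_def by (rule shift_minus(1))
    finally show ?thesis .
  qed
  have HA: "H = Aint f \<nu>0 p" using HB root unfolding Gf_def by simp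
  obtain x0 where x0: "ereal \<nu>0 < ereal x0" "ereal x0 < R" using ereal_dense2[OF ins(2)] by auto
  have "L < ereal x0" using ins(1) x0(1) by (rule less_trans)
  then have Hpos: "H > 0" unfolding HA using A_pos[OF p] x0 by simp
  have iA: "integrable lborel (\<lambda>y. max y 0 powr (p - 1) * f (\<nu>0 + y))"
    using shift_plus(2)[of "\<lambda>x. max (x - \<nu>0) 0 powr (p - 1) * f x" \<nu>0] int_phi(1)[OF p, of \<nu>0] by simp
  have iB: "integrable lborel (\<lambda>y. max y 0 powr (p - 1) * f (\<nu>0 - y))"
    using shift_minus(2)[of "\<lambda>x. max (\<nu>0 - x) 0 powr (p - 1) * f x" \<nu>0] int_phi(2)[OF p, of \<nu>0] by simp
  have sA: "(\<integral>y. max y 0 powr (p - 1) * f (\<nu>0 + y) \<partial>lborel) = Aint f \<nu>0 p"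
    using shift_plus(1)[of "\<lambda>x. max (x - \<nu>0) 0 powr (p - 1) * f x" \<nu>0] unfolding Aint_def by simp
  have sB: "(\<integral>y. max y 0 powr (p - 1) * f (\<nu>0 - y) \<partial>lborel) = Bint f \<nu>0 p"
    using shift_minus(1)[of "\<lambda>x. max (\<nu>0 - x) 0 powr (p - 1) * f x" \<nu>0] unfolding Bint_def by simp
  have lA: "integrable lborel (\<lambda>y. lam p y * f (\<nu>0 + y))"
    using shift_plus(2)[of "\<lambda>x. lam p (x - \<nu>0) * f x" \<nu>0] lam_int(1)[OF a b e, of \<nu>0] by simp
  have lB: "integrable lborel (\<lambda>y. lam p y * f (\<nu>0 - y))"
    using shift_minus(2)[of "\<lambda>x. lam p (\<nu>0 - x) * f x" \<nu>0] lam_int(2)[OF a b e, of \<nu>0] by simp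
  have slA: "(\<integral>y. lam p y * f (\<nu>0 + y) \<partial>lborel) = (\<integral>x. lam p (x - \<nu>0) * f x \<partial>lborel)"
    using shift_plus(1)[of "\<lambda>x. lam p (x - \<nu>0) * f x" \<nu>0] by simp
  have slB: "(\<integral>y. lam p y * f (\<nu>0 - y) \<partial>lborel) = (\<integral>x. lam p (\<nu>0 - x) * f x \<partial>lborel)"
    using shift_minus(1)[of "\<lambda>x. lam p (\<nu>0 - x) * f x" \<nu>0] by simp
  have gY: "dens_plus f L R p = (\<lambda>y. max y 0 powr (p - 1) * f (\<nu>0 + y) / H)"
    unfolding H_def \<nu>0_def by (rule ext) (rule dens_plus_eq)
  have gZ: "dens_minus f L p = (\<lambda>y. max y 0 powr (p - 1) * f (\<nu>0 - y) / H)"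
    unfolding H_def \<nu>0_def by (rule ext) (rule dens_minus_eq)
  have lnY: "\<And>y. ln y * (max y 0 powr (p - 1) * f (\<nu>0 + y) / H) = lam p y * f (\<nu>0 + y) / H"
    unfolding lam_def by (auto simp: max_def)
  have lnZ: "\<And>y. ln y * (max y 0 powr (p - 1) * f (\<nu>0 - y) / H) = lam p y * f (\<nu>0 - y) / H"
    unfolding lam_def by (auto simp: max_def)
  have PY: "pdens (dens_plus f L R p)"
    unfolding gY
  proof
    show "(\<lambda>y. max y 0 powr (p - 1) * f (\<nu>0 + y) / H) \<in> borel_measurable borel" by measurable
    show "\<And>y. 0 \<le> max y 0 powr (p - 1) * f (\<nu>0 + y) / H" using Hpos fnn by simp
    show "integrable lborel (\<lambda>y. max y 0 powr (p - 1) * f (\<nu>0 + y) / H)" using iA by simp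
    show "(\<integral>y. max y 0 powr (p - 1) * f (\<nu>0 + y) / H \<partial>lborel) = 1"
      using sA HA Hpos by (simp add: integral_divide_zero)
    show "\<And>y. y \<le> 0 \<Longrightarrow> max y 0 powr (p - 1) * f (\<nu>0 + y) / H = 0" by simp
    show "integrable lborel (\<lambda>y. ln y * (max y 0 powr (p - 1) * f (\<nu>0 + y) / H))"
      unfolding lnY using lA by simp
  qed
  have PZ: "pdens (dens_minus f L p)"
    unfolding gZ
  proof
    show "(\<lambda>y. max y 0 powr (p - 1) * f (\<nu>0 - y) / H) \<in> borel_measurable borel" by measurable
    show "\<And>y. 0 \<le> max y 0 powr (p - 1) * f (\<nu>0 - y) / H" using Hpos fnn by simp
    show "integrable lborel (\<lambda>y. max y 0 powr (p - 1) * f (\<nu>0 - y) / H)" using iB by simp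
    show "(\<integral>y. max y 0 powr (p - 1) * f (\<nu>0 - y) / H \<partial>lborel) = 1"
      using sB HB Hpos by (simp add: integral_divide_zero)
    show "\<And>y. y \<le> 0 \<Longrightarrow> max y 0 powr (p - 1) * f (\<nu>0 - y) / H = 0" by simp
    show "integrable lborel (\<lambda>y. ln y * (max y 0 powr (p - 1) * f (\<nu>0 - y) / H))"
      unfolding lnZ using lB by simp
  qed
  have "(\<integral>y. ln y * dens_minus f L p y \<partial>lborel) < (\<integral>y. ln y * dens_plus f L R p y \<partial>lborel)"
    using dom_ln[OF PY PZ dom] .
  also have "(\<integral>y. ln y * dens_plus f L R p y \<partial>lborel) = (\<integral>x. lam p (x - \<nu>0) * f x \<partial>lborel) / H"
    unfolding gY lnY using slA by (simp add: integral_divide_zero)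
  also have "(\<integral>y. ln y * dens_minus f L p y \<partial>lborel) = (\<integral>x. lam p (\<nu>0 - x) * f x \<partial>lborel) / H"
    unfolding gZ lnZ using slB by (simp add: integral_divide_zero)
  finally have "(\<integral>x. lam p (\<nu>0 - x) * f x \<partial>lborel) < (\<integral>x. lam p (x - \<nu>0) * f x \<partial>lborel)"
    using Hpos by (simp add: divide_less_cancel)
  moreover have "(\<integral>x. (lam p (x - \<nu>0) - lam p (\<nu>0 - x)) * f x \<partial>lborel)
      = (\<integral>x. lam p (x - \<nu>0) * f x \<partial>lborel) - (\<integral>x. lam p (\<nu>0 - x) * f x \<partial>lborel)"
    using lam_int[OF a b e, of \<nu>0] by (simp add: left_diff_distrib Bochner_Integration.integral_diff)
  ultimately show ?thesis unfolding \<nu>0_def by simp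
qed

end


context dens begin

lemma deriv_pos:
  assumes pin: "p \<in> interior (pdomain f)"
    and dom: "strict_stoch_dom (dens_plus f L R p) (dens_minus f L p)"
  shows "\<exists>d>0. (pmean f has_real_derivative d) (at p)"
proof -
  obtain \<delta> where \<delta>: "\<delta> > 0" "ball p \<delta> \<subseteq> pdomain f" using pin mem_interior by blast
  have inb: "\<And>x. \<bar>x - p\<bar> < \<delta> \<Longrightarrow> x \<in> pdomain f" using \<delta>(2) by (auto simp: dist_real_def subset_iff)
  have pd: "p \<in> pdomain f" using inb \<delta> by simp
  have "p - \<delta> / 2 \<in> pdomain f" using inb \<delta> by simp
  then have pg: "p - \<delta> / 2 \<ge> 1" by (rule pdom_ge1)
  define a where "a = p - \<delta> / 4"
  define b where "b = p + \<delta> / 4"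
  define e where "e = \<delta> / 16"
  have a: "a \<in> pdomain f" and b: "b \<in> pdomain f" unfolding a_def b_def using inb \<delta> by auto
  have a1: "1 < a" unfolding a_def using pg \<delta> by simp
  have e: "e > 0" "a + 2 * e \<le> p" "p + 2 * e \<le> b" "a + e \<le> p" "p \<le> b - e"
    unfolding a_def b_def e_def using \<delta> by auto
  define \<nu>0 where "\<nu>0 = pmean f p"
  have root: "Gf f \<nu>0 p = 0" unfolding \<nu>0_def using pmean_root[OF pd] .
  have ins: "L < ereal \<nu>0" "ereal \<nu>0 < R" unfolding \<nu>0_def using pmean_inside[OF pd] by auto
  define P where "P = (\<integral>x. (lam p (x - \<nu>0) - lam p (\<nu>0 - x)) * f x \<partial>lborel)"
  have Ppos: "P > 0" unfolding P_def \<nu>0_def using P_pos[OF pd a b e(1,4,5) dom] .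
  define D where "D = Qt f \<nu>0 0 p"
  have Dneg: "D < 0" unfolding D_def using Qt0_neg[OF a b a1 _ _ ins] e by simp
  have nuc: "(pmean f \<longlongrightarrow> \<nu>0) (at p)"
    using nu_cont[OF pd] at_within_interior[OF pin] unfolding \<nu>0_def by simp
  have lim: "((\<lambda>y. (pmean f y - pmean f p) / (y - p)) \<longlongrightarrow> - P / D) (at p within ball p e)"
    unfolding tendsto_at_iff_sequentially
  proof (intro allI impI)
    fix X assume X: "\<forall>i. X i \<in> ball p e - {p}" "X \<longlonglongrightarrow> p"
    define h where "h i = X i - p" for i
    have hne: "\<And>i. h i \<noteq> 0" using X(1) unfolding h_def by auto
    have hle: "\<And>i. \<bar>h i\<bar> \<le> e" using X(1) unfolding h_def by (auto simp: dist_real_def abs_minus_commute less_imp_le)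
    have hlim: "h \<longlonglongrightarrow> 0" unfolding h_def using X(2) by (simp add: LIM_zero)
    have Xh: "\<And>i. X i = p + h i" unfolding h_def by simp
    have Xd: "\<And>i. X i \<in> pdomain f"
    proof -
      fix i
      have "\<bar>X i - p\<bar> < \<delta>" using hle[of i] \<delta>(1) unfolding h_def e_def by simp
      then show "X i \<in> pdomain f" by (rule inb)
    qed
    have Xab: "\<And>i. a \<le> X i \<and> X i \<le> b"
    proof -
      fix i
      have "- e \<le> h i" "h i \<le> e" using hle[of i] by (auto simp: abs_le_iff)
      then show "a \<le> X i \<and> X i \<le> b" using e unfolding Xh by auto
    qed
    define \<Delta> where "\<Delta> i = pmean f (X i) - \<nu>0" for i
    have "(pmean f \<circ> X) \<longlonglongrightarrow> \<nu>0"
      using nuc X unfolding tendsto_at_iff_sequentially by auto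
    then have Dlim: "\<Delta> \<longlonglongrightarrow> 0" unfolding \<Delta>_def comp_def by (simp add: LIM_zero)
    define Pn where "Pn i = (Gf f \<nu>0 (p + h i) - Gf f \<nu>0 p) / h i" for i
    have Pl: "Pn \<longlonglongrightarrow> P" unfolding Pn_def P_def using P_lim[OF a b e(1,2,3) hne hle hlim] .
    define Qn where "Qn i = Qt f \<nu>0 (\<Delta> i) (X i)" for i
    have Ql: "Qn \<longlonglongrightarrow> D"
    proof -
      have "eventually (\<lambda>i. dist (\<Delta> i) 0 < 1) sequentially" using Dlim unfolding tendsto_iff by auto
      then obtain N where N: "\<And>i. i \<ge> N \<Longrightarrow> \<bar>\<Delta> i\<bar> < 1" by (auto simp: eventually_sequentially dist_real_def)
      have "(\<lambda>i. Qt f \<nu>0 (\<Delta> (i + N)) (X (i + N))) \<longlonglongrightarrow> Qt f \<nu>0 0 p"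
      proof (rule Q_lim[OF a b a1 ins])
        show "(\<lambda>i. \<Delta> (i + N)) \<longlonglongrightarrow> 0" using Dlim by (rule LIMSEQ_ignore_initial_segment)
        show "\<bar>\<Delta> (i + N)\<bar> \<le> 1" for i using N[of "i + N"] by simp
        show "(\<lambda>i. X (i + N)) \<longlonglongrightarrow> p" using X(2) by (rule LIMSEQ_ignore_initial_segment)
        show "a \<le> X (i + N)" "X (i + N) \<le> b" for i using Xab by auto
      qed
      then show ?thesis unfolding Qn_def D_def by (rule LIMSEQ_offset)
    qed
    have iden: "\<Delta> i * Qn i = - (h i * Pn i)" for i
    proof -
      have "Gf f (\<nu>0 + \<Delta> i) (X i) - Gf f \<nu>0 (X i) = \<Delta> i * Qn i"
        unfolding Qn_def by (rule G_diff_Qt[OF Xd])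
      moreover have "Gf f (\<nu>0 + \<Delta> i) (X i) = 0" unfolding \<Delta>_def using pmean_root[OF Xd] by simp
      moreover have "h i * Pn i = Gf f \<nu>0 (X i) - Gf f \<nu>0 p" unfolding Pn_def Xh using hne[of i] by simp
      ultimately show ?thesis using root by simp
    qed
    have evQ: "eventually (\<lambda>i. Qn i < 0) sequentially" using order_tendstoD(2)[OF Ql Dneg] .
    have ev: "eventually (\<lambda>i. ((\<lambda>y. (pmean f y - pmean f p) / (y - p)) \<circ> X) i = - Pn i / Qn i) sequentially"
      using evQ
    proof eventually_elim
      case (elim i)
      have qn: "Qn i \<noteq> 0" using elim by simp
      have "\<Delta> i = (\<Delta> i * Qn i) / Qn i" using qn by simp
      then have "\<Delta> i = - (h i * Pn i) / Qn i" using iden[of i] by simp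
      then have "\<Delta> i / h i = - Pn i / Qn i" using hne[of i] by (simp add: field_simps)
      then show ?case unfolding comp_def \<Delta>_def h_def \<nu>0_def by simp
    qed
    have "(\<lambda>i. - Pn i / Qn i) \<longlonglongrightarrow> - P / D"
      using Pl Ql Dneg by (intro tendsto_intros) auto
    then show "((\<lambda>y. (pmean f y - pmean f p) / (y - p)) \<circ> X) \<longlonglongrightarrow> - P / D"
      using tendsto_cong[OF ev] by (simp add: comp_def)
  qed
  have "(pmean f has_real_derivative - P / D) (at p within ball p e)"
    using lim by (simp add: has_field_derivative_iff)
  then have "(pmean f has_real_derivative - P / D) (at p)"
    using at_within_open[of p "ball p e"] e(1) by simp
  moreover have "- P / D > 0" using divide_pos_neg[OF Ppos Dneg] by simp
  ultimately show ?thesis by blast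
qed

lemma strict_mono_part:
  assumes all: "\<forall>p \<in> interior (pdomain f). strict_stoch_dom (dens_plus f L R p) (dens_minus f L p)"
  shows "strict_mono_on (pdomain f) (pmean f)"
proof (rule strict_mono_onI)
  fix q1 q2 assume q: "q1 \<in> pdomain f" "q2 \<in> pdomain f" "q1 < q2"
  have sub0: "{q1<..<q2} \<subseteq> pdomain f"
  proof
    fix x assume "x \<in> {q1<..<q2}"
    then show "x \<in> pdomain f" using pdom_down[OF q(2), of x] pdom_ge1[OF q(1)] by auto
  qed
  have sub: "{q1<..<q2} \<subseteq> interior (pdomain f)" using sub0 by (intro interior_maximal) auto
  have inner: "\<And>x y. q1 < x \<Longrightarrow> x < y \<Longrightarrow> y < q2 \<Longrightarrow> pmean f x < pmean f y"
  proof -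
    fix x y assume xy: "q1 < x" "x < y" "y < q2"
    show "pmean f x < pmean f y"
    proof (rule DERIV_pos_imp_increasing[OF xy(2)])
      fix z assume "x \<le> z" "z \<le> y"
      then have "z \<in> interior (pdomain f)" using sub xy by auto
      then show "\<exists>d. (pmean f has_real_derivative d) (at z) \<and> d > 0" using deriv_pos all by blast
    qed
  qed
  define m where "m = (q1 + q2) / 2"
  define x1 where "x1 = (q1 + m) / 2"
  define x2 where "x2 = (m + q2) / 2"
  have ord: "q1 < x1" "x1 < m" "m < x2" "x2 < q2" using q(3) unfolding m_def x1_def x2_def by auto
  have s1: "{q1<..<x1} \<subseteq> pdomain f" using sub0 ord by auto
  have s2: "{x2<..<q2} \<subseteq> pdomain f" using sub0 ord by auto
  have l1: "(pmean f \<longlongrightarrow> pmean f q1) (at q1 within {q1<..<x1})"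
    using tendsto_within_subset[OF nu_cont[OF q(1)] s1] .
  have nb1: "at q1 within {q1<..<x1} \<noteq> bot" using ord by (subst at_within_eq_bot_iff) auto
  have "eventually (\<lambda>y. pmean f y \<le> pmean f x1) (at q1 within {q1<..<x1})"
    using eventually_in_within[of "{q1<..<x1}" q1]
    by eventually_elim (use inner ord in \<open>auto intro: less_imp_le\<close>)
  then have c1: "pmean f q1 \<le> pmean f x1" using tendsto_upperbound[OF l1 _ nb1] by blast
  have l2: "(pmean f \<longlongrightarrow> pmean f q2) (at q2 within {x2<..<q2})"
    using tendsto_within_subset[OF nu_cont[OF q(2)] s2] .
  have nb2: "at q2 within {x2<..<q2} \<noteq> bot" using ord by (subst at_within_eq_bot_iff) auto
  have "eventually (\<lambda>y. pmean f x2 \<le> pmean f y) (at q2 within {x2<..<q2})"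
    using eventually_in_within[of "{x2<..<q2}" q2]
    by eventually_elim (use inner ord in \<open>auto intro: less_imp_le\<close>)
  then have c2: "pmean f x2 \<le> pmean f q2" using tendsto_lowerbound[OF l2 _ nb2] by blast
  have "pmean f x1 < pmean f m" "pmean f m < pmean f x2" using inner ord by auto
  then show "pmean f q1 < pmean f q2" using c1 c2 by linarith
qed

end

theorem theorem1:
  fixes f :: "real \<Rightarrow> real" and L R :: ereal
  assumes "L < R"
    and "f \<in> borel_measurable borel"
    and "\<And>x. f x \<ge> 0"
    and "integrable lborel f"
    and "(\<integral>x. f x \<partial>lborel) = 1"
    and "\<And>x. \<not> (L < ereal x \<and> ereal x < R) \<Longrightarrow> f x = 0"
    and "closure {x. f x > 0} = {x. L \<le> ereal x \<and> ereal x \<le> R}"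
    and "continuous_on {x. L < ereal x \<and> ereal x < R} f"
  shows "(\<forall>p \<in> interior (pdomain f).
            strict_stoch_dom (dens_plus f L R p) (dens_minus f L p)
            \<longrightarrow> (\<exists>d > 0. (pmean f has_real_derivative d) (at p)))
       \<and> ((interior (pdomain f) \<noteq> {} \<and>
            (\<forall>p \<in> interior (pdomain f). strict_stoch_dom (dens_plus f L R p) (dens_minus f L p)))
            \<longrightarrow> truly_pos_skewed f)"
proof -
  interpret dens f L R using assms by unfold_locales
  show ?thesis using deriv_pos strict_mono_part unfolding truly_pos_skewed_def by blast
qed


end
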